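(* Let $n\geq1$ and let $H$ be an irreducible subgroup of $SL(n,\mathbb{C})$. Then the order $n_{Z_n(H),\phi_H}$ of the Lagrangians of the associated alternate module $(Z_n(H),\phi_H)$ divides $n$.
   Context: Let $\xi=e^{2\pi i/n}$ and $\pi_n:SL(n,\mathbb{C})\to PSL(n,\mathbb{C})$. A subgroup of $SL(n,\mathbb{C})$ is irreducible if no nonzero proper subspace of $\mathbb{C}^n$ is invariant. $Z_n(H)=Z_{PSL(n,\mathbb{C})}(\pi_n(H))$, $U_n(H)=\pi_n^{-1}(Z_n(H))$, and $\phi_H(a,b)=k/n\in\mathbb{Q}/\mathbb{Z}$ where $\hat a\hat b\hat a^{-1}\hat b^{-1}=\xi^kI_n$ for lifts $\hat a,\hat b\in U_n(H)$. An alternate module is a finite abelian group $A$ with biadditive $\phi:A\times A\to\mathbb{Q}/\mathbb{Z}$, $\phi(a,a)=0$; its radical is $K_\phi=\{a:\phi(a,\cdot)=0\}$; a subgroup $L$ is Lagrangian if $L^\perp=L$, where $L^\perp=\{a:\phi(a,l)=0\ \forall l\in L\}$. All Lagrangians have the same order $n_{A,\phi}=\sqrt{|A||K_\phi|}$. *)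

theory Defs
  imports "HOL-Analysis.Analysis"
begin

text \<open>n x n complex matrices are complex^'n^'n with n = CARD('n) (n \<ge> 1 automatically).\<close>

definition SLn :: "(complex^'n::finite^'n) set" where
  "SLn = {A. det A = 1}"

text \<open>pi_n: SL(n,C) to PSL(n,C) = SL(n,C)/mu_n; an element of PSL is the coset of scalar multiples
  by n-th roots of unity.\<close>
definition projn :: "complex^'n::finite^'n \<Rightarrow> (complex^'n^'n) set" where
  "projn g = {mat c ** g | c. c ^ CARD('n) = 1}"

definition PSLn :: "(complex^'n::finite^'n) set set" where
  "PSLn = projn ` SLn"

definition cosetmul :: "(complex^'n::finite^'n) set \<Rightarrow> (complex^'n^'n) set \<Rightarrow> (complex^'n^'n) set" where
  "cosetmul X Y = {x ** y | x y. x \<in> X \<and> y \<in> Y}"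

definition sl_subgroup :: "(complex^'n::finite^'n) set \<Rightarrow> bool" where
  "sl_subgroup H \<longleftrightarrow> H \<subseteq> SLn \<and> mat 1 \<in> H \<and>
     (\<forall>a\<in>H. \<forall>b\<in>H. a ** b \<in> H) \<and> (\<forall>a\<in>H. matrix_inv a \<in> H)"

definition csubspace :: "(complex^'n::finite) set \<Rightarrow> bool" where
  "csubspace W \<longleftrightarrow> 0 \<in> W \<and> (\<forall>v\<in>W. \<forall>w\<in>W. v + w \<in> W) \<and> (\<forall>c::complex. \<forall>w\<in>W. c *s w \<in> W)"

definition sl_irreducible :: "(complex^'n::finite^'n) set \<Rightarrow> bool" where
  "sl_irreducible H \<longleftrightarrow>
     \<not> (\<exists>W. csubspace W \<and> W \<noteq> {0} \<and> W \<noteq> UNIV \<and> (\<forall>h\<in>H. \<forall>w\<in>W. h *v w \<in> W))"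

definition Zn :: "(complex^'n::finite^'n) set \<Rightarrow> (complex^'n^'n) set set" where
  "Zn H = {z \<in> PSLn. \<forall>h\<in>H. cosetmul z (projn h) = cosetmul (projn h) z}"

definition Un_H :: "(complex^'n::finite^'n) set \<Rightarrow> (complex^'n^'n) set" where
  "Un_H H = {g \<in> SLn. projn g \<in> Zn H}"

text \<open>phi_H(a,b): the scalar xi^k with ahat bhat ahat^-1 bhat^-1 = xi^k I for lifts ahat, bhat.
  Q/Z-valued k/n is encoded (isomorphically) by the root of unity xi^k; the value 0 corresponds to 1.\<close>
definition phiH :: "(complex^'n::finite^'n) set \<Rightarrow> (complex^'n^'n) set \<Rightarrow> complex" where
  "phiH a b = (let x = (SOME x. x \<in> a); y = (SOME y. y \<in> b) in
      (THE c. x ** y ** matrix_inv x ** matrix_inv y = mat c))"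

definition radK :: "(complex^'n::finite^'n) set \<Rightarrow> (complex^'n^'n) set set" where
  "radK H = {a \<in> Zn H. \<forall>b\<in>Zn H. phiH a b = 1}"

text \<open>n_{A,phi} = sqrt(|A| |K_phi|), the common order of the Lagrangians.\<close>
definition lagr_order :: "(complex^'n::finite^'n) set \<Rightarrow> real" where
  "lagr_order H = sqrt (real (card (Zn H) * card (radK H)))"

end

theory Submission
  imports Defs "Jordan_Normal_Form.Schur_Decomposition"
begin


abbreviation cmat :: "'a::zero \<Rightarrow> 'a^'n^'n" where "cmat \<equiv> Finite_Cartesian_Product.mat"

definition ix :: "'n::finite \<Rightarrow> nat" where
  "ix = (SOME f. bij_betw f (UNIV::'n set) {0..<CARD('n)})"

lemma ix_bij: "bij_betw (ix::'n::finite \<Rightarrow> nat) UNIV {0..<CARD('n)}"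
proof -
  have "\<exists>f. bij_betw f (UNIV::'n set) {0..<CARD('n)}"
    using ex_bij_betw_finite_nat[of "UNIV::'n set"] by simp
  then show ?thesis unfolding ix_def by (rule someI_ex)
qed

definition xi :: "nat \<Rightarrow> 'n::finite" where "xi = inv_into UNIV ix"

lemma xi_bij: "bij_betw (xi::nat \<Rightarrow> 'n::finite) {0..<CARD('n)} UNIV"
  unfolding xi_def using ix_bij bij_betw_inv_into by blast

lemma ix_xi[simp]: "i < CARD('n) \<Longrightarrow> ix (xi i :: 'n::finite) = i"
  unfolding xi_def using ix_bij[where 'n='n] by (simp add: bij_betw_inv_into_right)

lemma xi_ix[simp]: "xi (ix (k::'n::finite)) = k"
  unfolding xi_def using ix_bij[where 'n='n] by (simp add: bij_betw_inv_into_left)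

lemma ix_lt[simp]: "ix (k::'n::finite) < CARD('n)"
  using ix_bij[where 'n='n] by (auto simp: bij_betw_def)

definition jm :: "'a::zero^'n::finite^'n \<Rightarrow> 'a Matrix.mat" where
  "jm A = Matrix.mat CARD('n) CARD('n) (\<lambda>(i,j). A $ xi i $ xi j)"

definition jv :: "'a::zero^'n::finite \<Rightarrow> 'a Matrix.vec" where
  "jv v = Matrix.vec CARD('n) (\<lambda>i. v $ xi i)"

definition cv :: "'a Matrix.vec \<Rightarrow> 'a::zero^'n::finite" where
  "cv v = (\<chi> k. v $ ix k)"

lemma jm_carrier[simp]: "jm (A::'a::zero^'n::finite^'n) \<in> carrier_mat CARD('n) CARD('n)"
  by (simp add: jm_def)

lemma sum_xi: "(\<Sum>k<CARD('n). f (xi k :: 'n::finite)) = (\<Sum>k\<in>UNIV. f k)"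
proof -
  have "(\<Sum>k\<in>UNIV. f k) = (\<Sum>k\<in>{0..<CARD('n)}. f (xi k :: 'n))"
    using sum.reindex_bij_betw[OF xi_bij, of f] by simp
  then show ?thesis by (simp add: atLeast0LessThan)
qed

lemma jm_mult: "jm ((A::'a::comm_semiring_1^'n::finite^'n) ** B) = jm A * jm B"
proof (rule eq_matI)
  fix i j assume ij: "i < dim_row (jm A * jm B)" "j < dim_col (jm A * jm B)"
  then have i: "i < CARD('n)" and j: "j < CARD('n)" by (auto simp: jm_def)
  have "(jm A * jm B) $$ (i,j) = (\<Sum>k<CARD('n). A $ xi i $ xi k * B $ xi k $ xi j)"
    using i j by (simp add: jm_def scalar_prod_def row_def col_def atLeast0LessThan)
  also have "\<dots> = (\<Sum>k\<in>UNIV. A $ xi i $ k * B $ k $ xi j)"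
    by (rule sum_xi)
  finally show "jm (A ** B) $$ (i,j) = (jm A * jm B) $$ (i,j)"
    using i j by (simp add: jm_def matrix_matrix_mult_def)
qed (auto simp: jm_def)

lemma jm_mult_vec: "cv (jm (A::'a::comm_semiring_1^'n::finite^'n) *\<^sub>v v) = A *v cv v"
  if "v \<in> carrier_vec CARD('n)"
proof -
  have "(jm A *\<^sub>v v) $ ix k = (\<Sum>j\<in>UNIV. A $ k $ j * v $ ix j)" for k
  proof -
    have "(jm A *\<^sub>v v) $ ix k = (\<Sum>j<CARD('n). A $ k $ xi j * v $ ix (xi j :: 'n))"
      using that by (simp add: jm_def scalar_prod_def row_def atLeast0LessThan)
    also have "\<dots> = (\<Sum>j\<in>UNIV. A $ k $ j * v $ ix j)" by (rule sum_xi)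
    finally show ?thesis .
  qed
  then show ?thesis by (simp add: cv_def matrix_vector_mult_def vec_eq_iff)
qed


lemma eig_exists:
  fixes A :: "complex^'n::finite^'n"
  shows "\<exists>c v. v \<noteq> 0 \<and> A *v v = c *s v"
proof -
  obtain as where cp: "char_poly (jm A) = (\<Prod>a\<leftarrow>as. [:- a, 1:])" and len: "length as = CARD('n)"
    using char_poly_factorized[OF jm_carrier[of A]] by blast
  have "as \<noteq> []" using len by auto
  then obtain c rest where as: "as = c # rest" by (cases as) auto
  have "poly (char_poly (jm A)) c = 0" unfolding cp as by simp
  then have "eigenvalue (jm A) c" using eigenvalue_root_char_poly[OF jm_carrier[of A]] by simp
  then obtain v where ev: "eigenvector (jm A) v c" unfolding eigenvalue_def by blast
  then have vc: "v \<in> carrier_vec CARD('n)" and vnz: "v \<noteq> 0\<^sub>v CARD('n)"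
    and av: "jm A *\<^sub>v v = c \<cdot>\<^sub>v v"
    unfolding eigenvector_def by (auto simp: jm_def)
  from vnz vc obtain i where i: "i < CARD('n)" and vi: "v $ i \<noteq> 0"
    by (metis carrier_vecD eq_vecI index_zero_vec(1) index_zero_vec(2))
  have "cv v $ (xi i :: 'n) = v $ i" using i by (simp add: cv_def)
  then have nz: "(cv v :: complex^'n) \<noteq> 0" using vi by auto
  have "A *v cv v = cv (jm A *\<^sub>v v)" using jm_mult_vec[OF vc] by simp
  also have "\<dots> = c *s cv v" unfolding av using vc by (simp add: cv_def vec_eq_iff vector_scalar_mult_def)
  finally show ?thesis using nz by blast
qed

definition jtr :: "'a::comm_ring_1 Matrix.mat \<Rightarrow> 'a" where
  "jtr M = (\<Sum>i<dim_row M. M $$ (i,i))"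

lemma jtr_comm:
  assumes "X \<in> carrier_mat n n" "Y \<in> carrier_mat n n"
  shows "jtr (X * Y) = jtr (Y * X)"
proof -
  have "jtr (X * Y) = (\<Sum>i<n. \<Sum>k<n. X $$ (i,k) * Y $$ (k,i))"
    using assms by (simp add: jtr_def scalar_prod_def row_def col_def atLeast0LessThan)
  also have "\<dots> = (\<Sum>k<n. \<Sum>i<n. Y $$ (k,i) * X $$ (i,k))"
    by (subst sum.swap) (simp add: mult.commute)
  also have "\<dots> = jtr (Y * X)"
    using assms by (simp add: jtr_def scalar_prod_def row_def col_def atLeast0LessThan)
  finally show ?thesis .
qed

lemma jtr_jm: "jtr (jm (Q::'a::comm_ring_1^'n::finite^'n)) = trace Q"
proof -
  have "jtr (jm Q) = (\<Sum>i<CARD('n). Q $ xi i $ xi i)" by (simp add: jtr_def jm_def)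
  also have "\<dots> = trace Q" unfolding trace_def by (rule sum_xi)
  finally show ?thesis .
qed

lemma idem_trace_jnf:
  fixes B :: "complex Matrix.mat"
  assumes B: "B \<in> carrier_mat n n" and idem: "B * B = B"
  shows "\<exists>k::nat. jtr B = of_nat k"
proof -
  obtain es where lin: "char_poly B = (\<Prod>a\<leftarrow>es. [:- a, 1:])"
    using char_poly_factorized[OF B] by blast
  define T where "T = schur_upper_triangular B es"
  have T: "T \<in> carrier_mat n n" "upper_triangular T" "similar_mat B T"
    using schur_upper_triangular[OF B lin] unfolding T_def by auto
  then obtain P Q where w: "similar_mat_wit B T P Q" unfolding similar_mat_def by blast
  note d = similar_mat_witD2[OF B w]
  have QPX: "Q * (P * X) = X" if "X \<in> carrier_mat n n" for X
  proof -
    have "Q * (P * X) = (Q * P) * X" by (rule assoc_mult_mat[symmetric]) (use d that in auto)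
    also have "\<dots> = 1\<^sub>m n * X" by (simp only: d(2))
    finally show ?thesis using that by simp
  qed
  have PQX: "P * (Q * X) = X" if "X \<in> carrier_mat n n" for X
  proof -
    have "P * (Q * X) = (P * Q) * X" by (rule assoc_mult_mat[symmetric]) (use d that in auto)
    also have "\<dots> = 1\<^sub>m n * X" by (simp only: d(1))
    finally show ?thesis using that by simp
  qed
  have XQP: "X * Q * P = X" if "X \<in> carrier_mat n n" for X
  proof -
    have "X * Q * P = X * (Q * P)" by (rule assoc_mult_mat) (use d that in auto)
    also have "\<dots> = X * 1\<^sub>m n" by (simp only: d(2))
    finally show ?thesis using that by simp
  qed
  have TQ: "T = Q * B * P"
  proof -
    have "Q * B * P = Q * (P * (T * Q)) * P" using d by (simp add: assoc_mult_mat[of P n n T n Q n])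
    also have "\<dots> = T * Q * P" using d QPX[of "T * Q"] by simp
    also have "\<dots> = T" using d XQP by simp
    finally show ?thesis by simp
  qed
  have Pc: "P \<in> carrier_mat n n" and Qc: "Q \<in> carrier_mat n n" using d by auto
  have BP: "B * P \<in> carrier_mat n n" using B Pc by simp
  have TQ': "T = Q * (B * P)" using TQ B Pc Qc by simp
  have TT: "T * T = T"
  proof -
    have "T * T = (Q * (B * P)) * T" using TQ' by simp
    also have "\<dots> = Q * ((B * P) * T)" by (rule assoc_mult_mat) (use Qc BP T in auto)
    also have "(B * P) * T = B * (P * T)" by (rule assoc_mult_mat) (use B Pc T in auto)
    also have "P * T = B * P" unfolding TQ' using PQX[OF BP] .
    also have "B * (B * P) = (B * B) * P" by (rule assoc_mult_mat[symmetric]) (use B Pc in auto)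
    also have "\<dots> = B * P" using idem by simp
    also have "Q * (B * P) = T" using TQ' by simp
    finally show ?thesis .
  qed
  have diag: "T $$ (i,i) = 0 \<or> T $$ (i,i) = 1" if i: "i < n" for i
  proof -
    have "(T * T) $$ (i,i) = (\<Sum>k<n. T $$ (i,k) * T $$ (k,i))"
      using T i by (simp add: scalar_prod_def row_def col_def atLeast0LessThan)
    also have "\<dots> = (\<Sum>k\<in>{i}. T $$ (i,k) * T $$ (k,i))"
    proof (rule sum.mono_neutral_right)
      show "\<forall>k\<in>{..<n} - {i}. T $$ (i, k) * T $$ (k, i) = 0"
      proof
        fix k assume k: "k \<in> {..<n} - {i}"
        show "T $$ (i, k) * T $$ (k, i) = 0"
        proof (cases "k < i")
          case True then show ?thesis using T(1,2) i unfolding upper_triangular_def by auto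
        next
          case False then have "i < k" using k by auto
          then show ?thesis using T(1,2) k unfolding upper_triangular_def by auto
        qed
      qed
    qed (use i in auto)
    finally have "T $$ (i,i) * T $$ (i,i) = T $$ (i,i)" using TT by simp
    then show ?thesis by (metis mult_cancel_left2 mult_zero_left)
  qed
  have "jtr B = jtr (P * (T * Q))"
    using d by (simp add: assoc_mult_mat[of P n n T n Q n])
  also have "\<dots> = jtr ((T * Q) * P)"
    by (rule jtr_comm[of _ n]) (use d in auto)
  also have "\<dots> = jtr T"
    using d XQP[of T] by simp
  also have "\<dots> = (\<Sum>i<n. if T $$ (i,i) = 1 then 1 else 0)"
    unfolding jtr_def using T(1) diag by (intro sum.cong) auto
  also have "\<dots> = of_nat (card {i\<in>{..<n}. T $$ (i,i) = 1})"
    by (simp add: sum.If_cases Int_def conj_commute)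
  finally show ?thesis by blast
qed

lemma idem_trace:
  fixes Q :: "complex^'n::finite^'n"
  assumes "Q ** Q = Q"
  shows "\<exists>k::nat. trace Q = of_nat k"
  using idem_trace_jnf[OF jm_carrier[of Q]] assms jm_mult[of Q Q] jtr_jm[of Q] by metis


type_synonym 'n cm = "complex^'n^'n"

lemma cmat_entry: "(cmat c :: 'a::zero^'n^'n) $ i $ j = (if i = j then c else 0)"
  by (simp add: Finite_Cartesian_Product.mat_def)

lemma cmat_mul_left: "(cmat c ** A :: 'a::semiring_1^'n^'n) $ i $ j = c * A $ i $ j"
  by (simp add: matrix_matrix_mult_def cmat_entry if_distrib[of "\<lambda>x. x * y" for y] cong: if_cong)

lemma cmat_mul_right: "(A ** cmat c :: 'a::semiring_1^'n^'n) $ i $ j = A $ i $ j * c"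
  by (simp add: matrix_matrix_mult_def cmat_entry if_distrib[of "\<lambda>x. y * x" for y] cong: if_cong)

lemma cmat_comm: "A ** cmat c = cmat c ** (A :: 'a::comm_semiring_1^'n^'n)"
  by (simp add: Finite_Cartesian_Product.vec_eq_iff cmat_mul_left cmat_mul_right mult.commute)

lemma cmat_cmat: "cmat c ** (cmat d ** A) = cmat (c * d) ** (A :: 'a::comm_semiring_1^'n^'n)"
  by (simp add: Finite_Cartesian_Product.vec_eq_iff cmat_mul_left mult.assoc)

lemma cmat_cmat': "cmat c ** cmat d = (cmat (c * d) :: 'a::comm_semiring_1^'n^'n)"
  using cmat_cmat[of c d "cmat 1"] by simp

lemma cmat_inj: "(cmat c :: 'a::zero^'n::finite^'n) = cmat d \<Longrightarrow> c = d"
  by (metis cmat_entry)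

lemma det_cmat: "Determinants.det (cmat c :: 'a::comm_ring_1^'n::finite^'n) = c ^ CARD('n)"
  by (subst det_diagonal) (auto simp: cmat_entry)

lemma cmat_vec: "cmat c *v v = c *s (v :: 'a::comm_semiring_1^'n)"
  by (simp add: Finite_Cartesian_Product.vec_eq_iff matrix_vector_mult_def cmat_entry if_distrib[of "\<lambda>x. x * y" for y] cong: if_cong)

lemma trace_cmat_mul: "trace (cmat c ** A :: 'a::comm_semiring_1^'n^'n) = c * trace A"
  by (simp add: trace_def cmat_mul_left sum_distrib_left)

lemma cmat_vec_mul: "(cmat c ** A) *v v = c *s (A *v (v :: 'a::comm_semiring_1^'n))"
  by (metis cmat_vec matrix_vector_mul_assoc)

lemma matrix_add_rdistrib': "((B + C) ** A) = (B ** A) + (C ** (A::'a::semiring_1^'n^'n))"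
  by (simp add: matrix_matrix_mult_def Finite_Cartesian_Product.vec_eq_iff sum.distrib distrib_right)

lemma sum_mat_mul_left: "finite S \<Longrightarrow> (\<Sum>a\<in>S. f a) ** B = (\<Sum>a\<in>S. f a ** (B :: 'a::semiring_1^'n^'n))"
  by (induction S rule: finite_induct) (auto simp: matrix_add_rdistrib')

lemma sum_mat_mul_right: "finite S \<Longrightarrow> B ** (\<Sum>a\<in>S. f a) = (\<Sum>a\<in>S. B ** (f a :: 'a::semiring_1^'n^'n))"
  by (induction S rule: finite_induct) (auto simp: matrix_add_ldistrib)

lemma trace_sum: "finite S \<Longrightarrow> trace (\<Sum>a\<in>S. f a) = (\<Sum>a\<in>S. trace (f a :: 'a::comm_semiring_1^'n^'n))"
  by (induction S rule: finite_induct) (auto simp: trace_add trace_0[simplified])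

lemma cmat_sum: "finite S \<Longrightarrow> (\<Sum>a\<in>S. cmat (f a) ** A) = cmat (\<Sum>a\<in>S. f a) ** (A :: 'a::comm_semiring_1^'n^'n)"
  by (induction S rule: finite_induct) (auto simp: Finite_Cartesian_Product.vec_eq_iff cmat_mul_left distrib_right)

lemma cmat_1: "cmat 1 ** A = A" by simp

lemma inv_props:
  fixes A :: "'a::field^'n::finite^'n"
  assumes "invertible A"
  shows "A ** matrix_inv A = cmat 1" "matrix_inv A ** A = cmat 1"
  using someI_ex[OF assms[unfolded invertible_def]] unfolding matrix_inv_def by auto

lemma invertible_iff_det: "invertible (A::'a::field^'n::finite^'n) \<longleftrightarrow> Determinants.det A \<noteq> 0"
  by (rule invertible_det_nz)

lemma inv_det:
  fixes A :: "'a::field^'n::finite^'n"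
  assumes "invertible A"
  shows "Determinants.det (matrix_inv A) = inverse (Determinants.det A)"
proof -
  have "Determinants.det A * Determinants.det (matrix_inv A) = Determinants.det (A ** matrix_inv A)"
    by (simp only: Determinants.det_mul)
  also have "\<dots> = 1" by (simp only: inv_props(1)[OF assms] Determinants.det_I)
  finally have "Determinants.det A * Determinants.det (matrix_inv A) = 1" .
  then show ?thesis by (rule inverse_unique[symmetric])
qed

lemma cancel_scalar:
  fixes M :: "'a::field^'n::finite^'n"
  assumes "invertible M" "cmat c ** M = cmat d ** M"
  shows "c = d"
proof -
  have "cmat c ** M ** matrix_inv M = cmat d ** M ** matrix_inv M" using assms by simp
  then have "(cmat c :: 'a^'n^'n) = cmat d" using inv_props[OF assms(1)] by (simp add: matrix_mul_assoc[symmetric])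
  then show ?thesis by (rule cmat_inj)
qed

lemma eq_inv_left:
  fixes A B :: "'a::field^'n::finite^'n"
  assumes "invertible A" "A ** B = C"
  shows "B = matrix_inv A ** C"
proof -
  have "matrix_inv A ** C = (matrix_inv A ** A) ** B" unfolding assms(2)[symmetric] by (rule matrix_mul_assoc)
  then show ?thesis using inv_props(2)[OF assms(1)] by simp
qed

lemma schur_lemma:
  fixes A :: "'n::finite cm"
  assumes irr: "sl_irreducible H" and comm: "\<forall>h\<in>H. A ** h = h ** A"
  shows "\<exists>c. A = cmat c"
proof -
  obtain c v where v: "v \<noteq> 0" "A *v v = c *s v" using eig_exists[of A] by blast
  define W where "W = {w. A *v w = c *s w}"
  have sub: "csubspace W" unfolding csubspace_def W_def
  proof (intro conjI ballI allI)
    show "0 \<in> {w. A *v w = c *s w}" by simp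
  next
    fix x y assume "x \<in> {w. A *v w = c *s w}" "y \<in> {w. A *v w = c *s w}"
    then show "x + y \<in> {w. A *v w = c *s w}"
      by (simp add: matrix_vector_right_distrib vector_add_ldistrib)
  next
    fix d x assume "x \<in> {w. A *v w = c *s w}"
    then have "A *v (d *s x) = d *s (c *s x)" by (simp add: vec.scale)
    also have "\<dots> = c *s (d *s x)" by (simp add: vector_smult_assoc mult.commute)
    finally show "d *s x \<in> {w. A *v w = c *s w}" by simp
  qed
  have "W \<noteq> {0}" using v unfolding W_def by auto
  moreover have inv: "\<forall>h\<in>H. \<forall>w\<in>W. h *v w \<in> W"
  proof (intro ballI)
    fix h w assume h: "h \<in> H" and w: "w \<in> W"
    have "A *v (h *v w) = (A ** h) *v w" by (simp add: matrix_vector_mul_assoc)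
    also have "\<dots> = h *v (A *v w)" using comm h by (simp add: matrix_vector_mul_assoc)
    also have "\<dots> = c *s (h *v w)" using w unfolding W_def by (simp add: vec.scale)
    finally show "h *v w \<in> W" unfolding W_def by simp
  qed
  ultimately have "W = UNIV" using irr sub unfolding sl_irreducible_def by (meson)
  then have "\<forall>x. A *v x = cmat c *v x" unfolding W_def by (auto simp: cmat_vec)
  then have "A = cmat c" by (simp only: matrix_eq[symmetric])
  then show ?thesis by (rule exI)
qed


fun mp :: "'a::semiring_1^'n^'n \<Rightarrow> nat \<Rightarrow> 'a^'n^'n" where
  "mp A 0 = cmat 1"
| "mp A (Suc k) = A ** mp A k"

lemma mp_add: "mp A (i + j) = mp A i ** mp A j"
  by (induction i) (auto simp: matrix_mul_assoc)

lemma mp_comm: "A ** B = B ** A \<Longrightarrow> mp A k ** B = B ** mp A k"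
proof (induction k)
  case (Suc k)
  assume AB: "A ** B = B ** A"
  have "mp A (Suc k) ** B = A ** (mp A k ** B)" by (simp add: matrix_mul_assoc)
  also have "\<dots> = (A ** B) ** mp A k" using Suc AB by (simp add: matrix_mul_assoc)
  also have "\<dots> = B ** mp A (Suc k)" using AB by (simp add: matrix_mul_assoc)
  finally show ?case .
qed simp

lemma mp_Suc': "mp A (Suc k) = mp A k ** A"
  using mp_comm[of A A k] by simp

lemma roots_sum_pow:
  assumes m: "0 < m" and j: "0 < j" "j < m"
  shows "(\<Sum>z\<in>{z::complex. z ^ m = 1}. z ^ j) = 0"
proof -
  define R where "R = {z::complex. z ^ m = 1}"
  define w where "w = cis (2 * pi / real m)"
  have wm: "w ^ m = 1"
  proof -
    have "w ^ m = cis (real m * (2 * pi / real m))" unfolding w_def by (rule Complex.DeMoivre)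
    also have "real m * (2 * pi / real m) = 2 * pi" using m by simp
    also have "cis (2 * pi) = 1" by (simp add: complex_eq_iff)
    finally show ?thesis .
  qed
  have inj: "inj_on (\<lambda>k. cis (2 * pi * real k / real m)) {..<m}"
    using Complex.bij_betw_roots_unity[OF m] by (auto simp: bij_betw_def)
  have "cis (2 * pi * real j / real m) \<noteq> cis (2 * pi * real 0 / real m)"
    using inj_onD[OF inj, of j 0] j by auto
  then have ne: "cis (2 * pi * real j / real m) \<noteq> 1" by simp
  have "w ^ j = cis (real j * (2 * pi / real m))" unfolding w_def by (rule Complex.DeMoivre)
  also have "real j * (2 * pi / real m) = 2 * pi * real j / real m" by simp
  finally have weq: "w ^ j = cis (2 * pi * real j / real m)" .
  have wj: "w ^ j \<noteq> 1" using ne unfolding weq .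
  have w0: "w \<noteq> 0" by (simp add: w_def)
  have finR: "finite R" unfolding R_def using finite_roots_unity[of m] m by simp
  have "(\<Sum>z\<in>R. z ^ j) = (\<Sum>z\<in>R. (w * z) ^ j)"
  proof (rule sum.reindex_bij_witness[where j="\<lambda>z. z / w" and i="\<lambda>z. w * z"])
    fix z assume "z \<in> R" then show "z / w \<in> R" using wm w0 by (simp add: R_def power_divide)
  next
    fix z assume "z \<in> R" then show "w * z \<in> R" using wm by (simp add: R_def power_mult_distrib)
  qed (use w0 in auto)
  also have "\<dots> = w ^ j * (\<Sum>z\<in>R. z ^ j)" by (simp add: power_mult_distrib sum_distrib_left)
  finally have "(1 - w ^ j) * (\<Sum>z\<in>R. z ^ j) = 0" by (simp add: algebra_simps)
  then show ?thesis using wj unfolding R_def by simp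
qed

lemma roots_sum_inv_pow:
  assumes m: "0 < m" and j: "j < m"
  shows "(\<Sum>z\<in>{z::complex. z ^ m = 1}. inverse z ^ j) = (if j = 0 then of_nat m else 0)"
proof -
  define R where "R = {z::complex. z ^ m = 1}"
  have "(\<Sum>z\<in>R. inverse z ^ j) = (\<Sum>z\<in>R. z ^ j)"
    by (rule sum.reindex_bij_witness[where i="inverse" and j="inverse"])
       (auto simp: R_def power_inverse)
  also have "\<dots> = (if j = 0 then of_nat m else 0)"
  proof (cases "j = 0")
    case True then show ?thesis using card_roots_unity_eq[OF m] by (simp add: R_def)
  next
    case False then show ?thesis using roots_sum_pow[OF m _ j] unfolding R_def by simp
  qed
  finally show ?thesis unfolding R_def .
qed

lemma cmat_nz: "(cmat (1::'a::zero_neq_one) :: 'a^'n::finite^'n) \<noteq> 0"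
proof
  assume "(cmat 1 :: 'a^'n^'n) = 0"
  then have "(cmat 1 :: 'a^'n^'n) = cmat 0" by simp
  then have "(1::'a) = 0" by (rule cmat_inj)
  then show False by simp
qed

lemma mat_nz_vec:
  fixes E :: "'a::semiring_1^'n^'m"
  assumes "E \<noteq> 0" shows "\<exists>v. E *v v \<noteq> 0"
proof (rule ccontr)
  assume "\<not> ?thesis"
  then have "\<forall>v. E *v v = 0 *v v" by simp
  then have "E = 0" by (simp only: matrix_eq[symmetric])
  then show False using assms by simp
qed

lemma mul_sum_cmat_left: "(A :: 'a::comm_semiring_1^'n^'n) ** (cmat c ** B) = cmat c ** (A ** (B :: 'a^'n^'n))"
proof -
  have "A ** (cmat c ** B) = (A ** cmat c) ** B" by (rule matrix_mul_assoc)
  also have "\<dots> = (cmat c ** A) ** B" by (simp only: cmat_comm[of A c])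
  also have "\<dots> = cmat c ** (A ** B)" by (rule matrix_mul_assoc[symmetric])
  finally show ?thesis .
qed

lemma common_eigvec_step:
  fixes G :: "'n::finite cm set"
  assumes comm: "\<forall>a\<in>G. \<forall>b\<in>G. a ** b = b ** a"
    and b: "b \<in> G" and m: "0 < m" "mp b m = cmat 1"
    and E: "E \<noteq> 0" "\<forall>a\<in>G. a ** E = E ** a"
  shows "\<exists>l F. F \<noteq> 0 \<and> b ** F = cmat l ** F \<and> (\<forall>a\<in>G. a ** F = F ** a) \<and>
            (\<exists>P. F = P ** E \<and> (\<forall>a\<in>G. a ** P = P ** a))"
proof -
  define R where "R = {z::complex. z ^ m = 1}"
  have finR: "finite R" unfolding R_def using finite_roots_unity[of m] m by simp
  define EL where "EL l = (\<Sum>j<m. cmat (inverse l ^ j) ** mp b j)" for l :: complex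
  have sumEL: "(\<Sum>l\<in>R. EL l) = cmat (of_nat m)"
  proof -
    have "(\<Sum>l\<in>R. EL l) = (\<Sum>j<m. \<Sum>l\<in>R. cmat (inverse l ^ j) ** mp b j)"
      unfolding EL_def by (rule sum.swap)
    also have "\<dots> = (\<Sum>j<m. cmat (\<Sum>l\<in>R. inverse l ^ j) ** mp b j)"
      using finR by (simp add: cmat_sum)
    also have "\<dots> = (\<Sum>j<m. cmat (if j = 0 then of_nat m else 0) ** mp b j)"
      using roots_sum_inv_pow[OF m(1)] unfolding R_def by simp
    also have "\<dots> = (\<Sum>j\<in>{0}. cmat (of_nat m) ** mp b j)"
      by (rule sum.mono_neutral_cong_right) (use m in auto)
    finally show ?thesis by simp
  qed
  have bEL: "b ** EL l = cmat l ** EL l" if l: "l \<in> R" for l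
  proof -
    have l0: "l \<noteq> 0" using l m unfolding R_def by (auto simp: zero_power)
    define f where "f j = cmat (inverse l ^ j) ** mp b j" for j
    have "b ** EL l = (\<Sum>j<m. cmat (inverse l ^ j) ** mp b (Suc j))"
      unfolding EL_def by (simp add: sum_mat_mul_right mul_sum_cmat_left)
    also have "\<dots> = (\<Sum>j<m. cmat l ** f (Suc j))"
      using l0 by (intro sum.cong) (auto simp: f_def cmat_cmat field_simps)
    also have "\<dots> = cmat l ** (\<Sum>j<m. f (Suc j))" by (simp add: sum_mat_mul_right)
    also have "(\<Sum>j<m. f (Suc j)) = (\<Sum>j<m. f j)"
    proof -
      have "(\<Sum>j<Suc m. f j) = f 0 + (\<Sum>j<m. f (Suc j))" by (rule sum.lessThan_Suc_shift)
      moreover have "(\<Sum>j<Suc m. f j) = (\<Sum>j<m. f j) + f m" by simp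
      moreover have "f m = f 0" using l m unfolding f_def R_def by (simp add: power_inverse)
      ultimately show ?thesis by (simp add: add.commute)
    qed
    finally show ?thesis unfolding EL_def f_def .
  qed
  have ELc: "a ** EL l = EL l ** a" if "a \<in> G" for a l
  proof -
    have "a ** mp b j = mp b j ** a" for j using mp_comm[of b a j] comm b that by simp
    then have "a ** (cmat (inverse l ^ j) ** mp b j) = (cmat (inverse l ^ j) ** mp b j) ** a" for j
    proof -
      have "a ** (cmat (inverse l ^ j) ** mp b j) = cmat (inverse l ^ j) ** (a ** mp b j)"
        by (rule mul_sum_cmat_left)
      also have "\<dots> = cmat (inverse l ^ j) ** (mp b j ** a)" using \<open>\<And>j. a ** mp b j = mp b j ** a\<close> by simp
      finally show ?thesis by (simp add: matrix_mul_assoc)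
    qed
    then show ?thesis unfolding EL_def
      by (simp add: sum_mat_mul_right sum_mat_mul_left)
  qed
  have "cmat (of_nat m) ** E \<noteq> 0"
  proof
    assume "cmat (of_nat m) ** E = 0"
    then have "cmat (inverse (of_nat m)) ** (cmat (of_nat m) ** E) = 0" by simp
    then show False using m E(1) by (simp add: cmat_cmat)
  qed
  then have "(\<Sum>l\<in>R. EL l ** E) \<noteq> 0" using finR by (simp add: sum_mat_mul_left[symmetric] sumEL)
  then obtain l where l: "l \<in> R" and nz: "EL l ** E \<noteq> 0"
    by (metis (no_types, lifting) sum.neutral)
  show ?thesis
  proof (intro exI conjI)
    show "EL l ** E \<noteq> 0" by (rule nz)
    show "b ** (EL l ** E) = cmat l ** (EL l ** E)" using bEL[OF l] by (simp add: matrix_mul_assoc)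
    show "\<forall>a\<in>G. a ** (EL l ** E) = EL l ** E ** a"
    proof
      fix a assume a: "a \<in> G"
      have "a ** (EL l ** E) = (a ** EL l) ** E" by (simp add: matrix_mul_assoc)
      also have "\<dots> = EL l ** (a ** E)" using ELc[OF a] by (simp add: matrix_mul_assoc)
      also have "\<dots> = EL l ** E ** a" using E(2) a by (simp add: matrix_mul_assoc)
      finally show "a ** (EL l ** E) = EL l ** E ** a" .
    qed
    show "EL l ** E = EL l ** E" ..
    show "\<forall>a\<in>G. a ** EL l = EL l ** a" using ELc by blast
  qed
qed

lemma common_eigvec:
  fixes G :: "'n::finite cm set"
  assumes fin: "finite G" and comm: "\<forall>a\<in>G. \<forall>b\<in>G. a ** b = b ** a"
    and ord: "\<forall>a\<in>G. \<exists>m>0. mp a m = cmat 1"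
  shows "\<exists>w. w \<noteq> 0 \<and> (\<forall>a\<in>G. \<exists>c. a *v w = c *s w)"
proof -
  have allF: "\<forall>F. F \<subseteq> G \<longrightarrow> (\<exists>E. E \<noteq> 0 \<and> (\<forall>a\<in>G. a ** E = E ** a) \<and> (\<forall>a\<in>F. \<exists>c. a ** E = cmat c ** E))"
  proof (intro allI impI)
    fix F assume "F \<subseteq> G"
    then have "finite F" using fin finite_subset by blast
    then show "\<exists>E. E \<noteq> 0 \<and> (\<forall>a\<in>G. a ** E = E ** a) \<and> (\<forall>a\<in>F. \<exists>c. a ** E = cmat c ** E)"
      using \<open>F \<subseteq> G\<close>
    proof (induction F rule: finite_induct)
      case empty
      show ?case by (rule exI[of _ "cmat 1"]) (simp add: cmat_nz)
    next
      case (insert b F)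
      then obtain E where E: "E \<noteq> 0" "\<forall>a\<in>G. a ** E = E ** a" "\<forall>a\<in>F. \<exists>c. a ** E = cmat c ** E"
        by auto
      have bG: "b \<in> G" using insert by auto
      obtain m where m: "0 < m" "mp b m = cmat 1" using ord bG by blast
      obtain l F' P where F': "F' \<noteq> 0" "b ** F' = cmat l ** F'" "\<forall>a\<in>G. a ** F' = F' ** a"
        and P: "F' = P ** E" "\<forall>a\<in>G. a ** P = P ** a"
        using common_eigvec_step[OF comm bG m E(1,2)] by blast
      have "\<forall>a\<in>F. \<exists>c. a ** F' = cmat c ** F'"
      proof
        fix a assume a: "a \<in> F"
        then obtain c where c: "a ** E = cmat c ** E" using E(3) by blast
        have aG: "a \<in> G" using a insert by auto
        have "a ** F' = (a ** P) ** E" using P(1) by (simp add: matrix_mul_assoc)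
        also have "\<dots> = (P ** a) ** E" using P(2) aG by simp
        also have "\<dots> = P ** (a ** E)" by (simp add: matrix_mul_assoc)
        finally have "a ** F' = P ** (a ** E)" .
        also have "\<dots> = cmat c ** F'" using c P by (simp add: mul_sum_cmat_left)
        finally show "\<exists>c. a ** F' = cmat c ** F'" by blast
      qed
      then show ?case using F' by blast
    qed
  qed
  note ex = allF[rule_format, OF subset_refl]
  obtain E where E0: "E \<noteq> 0 \<and> (\<forall>a\<in>G. a ** E = E ** a) \<and> (\<forall>a\<in>G. \<exists>c. a ** E = cmat c ** E)"
    using ex ..
  note E = E0[THEN conjunct1] E0[THEN conjunct2, THEN conjunct2]
  obtain v where v: "E *v v \<noteq> 0" using mat_nz_vec[OF E(1)] by blast
  show ?thesis
  proof (rule exI[of _ "E *v v"], intro conjI ballI)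
    show "E *v v \<noteq> 0" by (rule v)
    fix a assume "a \<in> G"
    then obtain c where "a ** E = cmat c ** E" using E(2) by blast
    then have "a *v (E *v v) = c *s (E *v v)"
      by (simp add: matrix_vector_mul_assoc cmat_vec_mul)
    then show "\<exists>c. a *v (E *v v) = c *s (E *v v)" by blast
  qed
qed


definition cgrp :: "'n::finite cm set \<Rightarrow> bool" where
  "cgrp S \<longleftrightarrow> finite S \<and> cmat 1 \<in> S \<and> (\<forall>a\<in>S. \<forall>b\<in>S. a ** b \<in> S) \<and>
     (\<forall>a\<in>S. invertible a \<and> matrix_inv a \<in> S) \<and>
     (\<forall>a\<in>S. \<forall>b\<in>S. \<exists>c. a ** b = cmat c ** (b ** a)) \<and>
     (\<forall>c::complex. c ^ CARD('n) = 1 \<longrightarrow> cmat c \<in> S)"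

definition ctr :: "'n::finite cm set \<Rightarrow> 'n cm set" where
  "ctr S = {a\<in>S. \<forall>b\<in>S. a ** b = b ** a}"

definition abel :: "'n::finite cm set \<Rightarrow> bool" where
  "abel S \<longleftrightarrow> (\<forall>a\<in>S. \<forall>b\<in>S. a ** b = b ** a)"

definition sc :: "complex \<Rightarrow> 'n::finite cm \<Rightarrow> 'n cm" where
  "sc c X = cmat c ** X"

lemma sc_mul_left[simp]: "sc c X ** Y = sc c (X ** Y)"
  unfolding sc_def by (simp add: matrix_mul_assoc)

lemma sc_mul_right[simp]: "X ** sc c Y = sc c (X ** Y)"
  unfolding sc_def by (rule mul_sum_cmat_left)

lemma sc_sc[simp]: "sc c (sc d X) = sc (c * d) X"
  unfolding sc_def by (rule cmat_cmat)

lemma sc_1[simp]: "sc 1 X = X" unfolding sc_def by simp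

definition kap :: "'n::finite cm \<Rightarrow> 'n cm \<Rightarrow> complex" where
  "kap a b = (SOME c. a ** b = sc c (b ** a))"

lemma cgrpD:
  fixes S :: "'n::finite cm set"
  assumes "cgrp S"
  shows "finite S" "cmat 1 \<in> S" "\<And>a b. a \<in> S \<Longrightarrow> b \<in> S \<Longrightarrow> a ** b \<in> S"
    "\<And>a. a \<in> S \<Longrightarrow> invertible a" "\<And>a. a \<in> S \<Longrightarrow> matrix_inv a \<in> S"
    "\<And>a b. a \<in> S \<Longrightarrow> b \<in> S \<Longrightarrow> \<exists>c. a ** b = sc c (b ** a)"
    "\<And>c::complex. c ^ CARD('n) = 1 \<Longrightarrow> cmat c \<in> S"
  using assms unfolding cgrp_def sc_def by auto

lemma kap_eq:
  assumes "cgrp S" "a \<in> S" "b \<in> S"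
  shows "a ** b = sc (kap a b) (b ** a)"
  unfolding kap_def using cgrpD(6)[OF assms] by (rule someI_ex)

lemma kap_unique:
  assumes "cgrp S" "a \<in> S" "b \<in> S" "a ** b = sc c (b ** a)"
  shows "kap a b = c"
proof -
  have inv: "invertible (b ** a)" using cgrpD(4)[OF assms(1)] assms(2,3) by (simp add: invertible_mult)
  have "sc (kap a b) (b ** a) = sc c (b ** a)" using kap_eq[OF assms(1-3)] assms(4) by simp
  then show ?thesis unfolding sc_def by (rule cancel_scalar[OF inv])
qed

lemma kap_1_iff:
  assumes "cgrp S" "a \<in> S" "b \<in> S"
  shows "kap a b = 1 \<longleftrightarrow> a ** b = b ** a"
proof
  assume "kap a b = 1" then show "a ** b = b ** a" using kap_eq[OF assms] by simp
next
  assume "a ** b = b ** a" then show "kap a b = 1" using kap_unique[OF assms, of 1] by simp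
qed

lemma kap_mult2:
  assumes S: "cgrp S" and x: "x \<in> S" and g: "g \<in> S" and h: "h \<in> S"
  shows "kap x (g ** h) = kap x g * kap x h"
proof -
  have gh: "g ** h \<in> S" using cgrpD(3)[OF S g h] .
  have "x ** (g ** h) = (x ** g) ** h" by (rule matrix_mul_assoc)
  also have "\<dots> = sc (kap x g) (g ** x) ** h" by (simp only: kap_eq[OF S x g])
  also have "\<dots> = sc (kap x g) (g ** (x ** h))" by (simp add: matrix_mul_assoc)
  also have "\<dots> = sc (kap x g) (g ** sc (kap x h) (h ** x))" by (simp only: kap_eq[OF S x h])
  also have "\<dots> = sc (kap x g * kap x h) ((g ** h) ** x)" by (simp add: matrix_mul_assoc)
  finally show ?thesis by (rule kap_unique[OF S x gh])
qed

lemma kap_mult1: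
  assumes S: "cgrp S" and g: "g \<in> S" and h: "h \<in> S" and y: "y \<in> S"
  shows "kap (g ** h) y = kap g y * kap h y"
proof -
  have gh: "g ** h \<in> S" using cgrpD(3)[OF S g h] .
  have "(g ** h) ** y = g ** (h ** y)" by (rule matrix_mul_assoc[symmetric])
  also have "\<dots> = g ** sc (kap h y) (y ** h)" by (simp only: kap_eq[OF S h y])
  also have "\<dots> = sc (kap h y) ((g ** y) ** h)" by (simp add: matrix_mul_assoc)
  also have "\<dots> = sc (kap h y) (sc (kap g y) (y ** g) ** h)" by (simp only: kap_eq[OF S g y])
  also have "\<dots> = sc (kap g y * kap h y) (y ** (g ** h))" by (simp add: matrix_mul_assoc mult.commute)
  finally show ?thesis by (rule kap_unique[OF S gh y])
qed

lemma kap_one2: "cgrp S \<Longrightarrow> x \<in> S \<Longrightarrow> kap x (cmat 1) = 1"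
  using kap_1_iff[of S x "cmat 1"] cgrpD(2)[of S] by simp

lemma kap_one1: "cgrp S \<Longrightarrow> x \<in> S \<Longrightarrow> kap (cmat 1) x = 1"
  using kap_1_iff[of S "cmat 1" x] cgrpD(2)[of S] by simp

lemma kap_nz:
  assumes S: "cgrp S" and x: "x \<in> S" and g: "g \<in> S"
  shows "kap x g \<noteq> 0"
proof
  assume "kap x g = 0"
  then have "x ** g = 0" using kap_eq[OF S x g] by (simp add: sc_def)
  moreover have "invertible (x ** g)" using cgrpD(4)[OF S] x g by (simp add: invertible_mult)
  ultimately have "x ** g ** matrix_inv (x ** g) = cmat 1" using inv_props(1)[of "x ** g"] by simp
  then have "cmat 1 = x ** g ** matrix_inv (x ** g)" by simp
  also have "\<dots> = 0" using \<open>x ** g = 0\<close> by simp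
  finally show False by (rule notE[OF cmat_nz])
qed

lemma kap_inv2:
  assumes S: "cgrp S" and x: "x \<in> S" and g: "g \<in> S"
  shows "kap x (matrix_inv g) = inverse (kap x g)"
proof -
  have gi: "matrix_inv g \<in> S" using cgrpD(5)[OF S g] .
  have "kap x g * kap x (matrix_inv g) = kap x (g ** matrix_inv g)"
    using kap_mult2[OF S x g gi] by simp
  also have "\<dots> = 1" using inv_props(1)[OF cgrpD(4)[OF S g]] kap_one2[OF S x] by simp
  finally show ?thesis by (rule inverse_unique[symmetric])
qed

lemma kap_inv1:
  assumes S: "cgrp S" and x: "x \<in> S" and g: "g \<in> S"
  shows "kap (matrix_inv g) x = inverse (kap g x)"
proof -
  have gi: "matrix_inv g \<in> S" using cgrpD(5)[OF S g] .
  have "kap g x * kap (matrix_inv g) x = kap (g ** matrix_inv g) x"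
    using kap_mult1[OF S g gi x] by simp
  also have "\<dots> = 1" using inv_props(1)[OF cgrpD(4)[OF S g]] kap_one1[OF S x] by simp
  finally show ?thesis by (rule inverse_unique[symmetric])
qed

lemma mp_in: "cgrp S \<Longrightarrow> x \<in> S \<Longrightarrow> mp x k \<in> S"
  by (induction k) (auto dest: cgrpD)

lemma kap_pow2:
  assumes S: "cgrp S" and x: "x \<in> S" and y: "y \<in> S"
  shows "kap x (mp y k) = kap x y ^ k"
proof (induction k)
  case 0 then show ?case using kap_one2[OF S x] by simp
next
  case (Suc k) then show ?case using kap_mult2[OF S x y mp_in[OF S y]] by simp
qed

lemma kap_pow1:
  assumes S: "cgrp S" and x: "x \<in> S" and y: "y \<in> S"
  shows "kap (mp x k) y = kap x y ^ k"
proof (induction k)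
  case 0 then show ?case using kap_one1[OF S y] by simp
next
  case (Suc k) then show ?case using kap_mult1[OF S x mp_in[OF S x] y] by simp
qed

lemma mp_mult: "mp A (i * j) = mp (mp A i) j"
proof (induction j)
  case (Suc j)
  have "mp A (i * Suc j) = mp A (i + i * j)" by simp
  also have "\<dots> = mp A i ** mp A (i * j)" by (rule mp_add)
  finally show ?case using Suc by simp
qed simp

lemma inv_comm:
  fixes g x :: "'n::finite cm"
  assumes "invertible g" "x ** g = g ** x"
  shows "x ** matrix_inv g = matrix_inv g ** x"
proof -
  note I = inv_props[OF assms(1)]
  have "x ** matrix_inv g = (matrix_inv g ** g) ** x ** matrix_inv g" using I by simp
  also have "\<dots> = matrix_inv g ** (g ** x) ** matrix_inv g" by (simp add: matrix_mul_assoc)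
  also have "\<dots> = matrix_inv g ** (x ** g) ** matrix_inv g" using assms(2) by simp
  also have "\<dots> = matrix_inv g ** x ** (g ** matrix_inv g)" by (simp add: matrix_mul_assoc)
  also have "\<dots> = matrix_inv g ** x" using I by simp
  finally show ?thesis .
qed


lemma root_dvd:
  fixes w :: complex
  assumes p: "prime p" and wp: "w ^ p = 1" and w1: "w \<noteq> 1"
  shows "w ^ k = 1 \<longleftrightarrow> p dvd k"
proof
  assume "p dvd k" then obtain q where "k = p * q" by (auto elim: dvdE)
  then show "w ^ k = 1" using wp by (simp add: power_mult)
next
  assume wk: "w ^ k = 1"
  show "p dvd k"
  proof (rule ccontr)
    assume nd: "\<not> p dvd k"
    then have k0: "k \<noteq> 0" by (metis dvd_0_right)
    have "coprime p k" using p nd by (simp add: prime_imp_coprime)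
    then have g: "gcd k p = 1" by (simp add: coprime_iff_gcd_eq_1 gcd.commute)
    obtain u v where uv: "k * u = p * v + gcd k p" using bezout_nat[OF k0, of p] by blast
    have "w ^ (k * u) = 1" using wk by (simp add: power_mult)
    moreover have "w ^ (k * u) = w" using uv g wp by (simp add: power_add power_mult)
    ultimately show False using w1 by simp
  qed
qed

lemma roots_as_powers:
  fixes w :: complex
  assumes p: "prime p" and wp: "w ^ p = 1" and w1: "w \<noteq> 1"
  shows "{z. z ^ p = 1} = (\<lambda>i. w ^ i) ` {..<p}" "inj_on (\<lambda>i. w ^ i) {..<p}"
proof -
  have p0: "0 < p" using p by (simp add: prime_gt_0_nat)
  have w0: "w \<noteq> 0" using wp p0 by (auto simp: zero_power)
  have key: "i < j \<Longrightarrow> j < p \<Longrightarrow> w ^ i \<noteq> w ^ j" for i j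
  proof
    assume ij: "i < j" "j < p" and eq: "w ^ i = w ^ j"
    have "w ^ j = w ^ i * w ^ (j - i)" using ij by (simp add: power_add[symmetric])
    then have "w ^ (j - i) = 1" using eq w0 by simp
    then have "p dvd (j - i)" using root_dvd[OF p wp w1] by simp
    then show False using ij by (auto dest: dvd_imp_le)
  qed
  show inj: "inj_on (\<lambda>i. w ^ i) {..<p}"
  proof (rule inj_onI)
    fix i j assume i: "i \<in> {..<p}" and j: "j \<in> {..<p}" and eq: "w ^ i = w ^ j"
    show "i = j"
    proof (rule ccontr)
      assume "i \<noteq> j"
      then consider "i < j" | "j < i" by linarith
      then show False
      proof cases
        case 1 then show False using key[of i j] eq j by auto
      next
        case 2 then show False using key[of j i] eq i by auto
      qed
    qed
  qed
  have sub: "(\<lambda>i. w ^ i) ` {..<p} \<subseteq> {z. z ^ p = 1}"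
  proof
    fix z assume "z \<in> (\<lambda>i. w ^ i) ` {..<p}"
    then obtain i where "z = w ^ i" by blast
    then have "z ^ p = (w ^ p) ^ i" by (simp add: power_mult[symmetric] mult.commute)
    then show "z \<in> {z. z ^ p = 1}" using wp by simp
  qed
  have c1: "card ((\<lambda>i. w ^ i) ` {..<p}) = p" using card_image[OF inj] by simp
  have c2: "card {z::complex. z ^ p = 1} = p" using card_roots_unity_eq[OF p0] .
  have fin: "finite {z::complex. z ^ p = 1}" using finite_roots_unity[of p] p0 by simp
  show "{z. z ^ p = 1} = (\<lambda>i. w ^ i) ` {..<p}"
    using card_subset_eq[OF fin sub] c1 c2 by simp
qed

lemma cancel_left:
  fixes A :: "'a::field^'n::finite^'n"
  assumes "invertible A" "A ** B = A ** C"
  shows "B = C"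
proof -
  have "matrix_inv A ** (A ** B) = matrix_inv A ** (A ** C)" using assms(2) by simp
  then show ?thesis using inv_props(2)[OF assms(1)] by (simp add: matrix_mul_assoc)
qed

lemma cancel_right:
  fixes A :: "'a::field^'n::finite^'n"
  assumes "invertible A" "B ** A = C ** A"
  shows "B = C"
proof -
  have "(B ** A) ** matrix_inv A = (C ** A) ** matrix_inv A" using assms(2) by simp
  then show ?thesis using inv_props(1)[OF assms(1)] by (simp add: matrix_mul_assoc[symmetric])
qed

lemma ctr_sub: "ctr S \<subseteq> S" by (auto simp: ctr_def)

lemma one_ctr: "cgrp S \<Longrightarrow> cmat 1 \<in> ctr S"
  using cgrpD(2) by (auto simp: ctr_def)

lemma ctr_mult:
  assumes S: "cgrp S" and a: "a \<in> ctr S" and b: "b \<in> ctr S"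
  shows "a ** b \<in> ctr S"
proof -
  have aS: "a \<in> S" and bS: "b \<in> S" using a b by (auto simp: ctr_def)
  have "(a ** b) ** h = h ** (a ** b)" if h: "h \<in> S" for h
  proof -
    have "(a ** b) ** h = a ** (b ** h)" by (simp add: matrix_mul_assoc)
    also have "\<dots> = a ** (h ** b)" using b h by (simp add: ctr_def)
    also have "\<dots> = (a ** h) ** b" by (simp add: matrix_mul_assoc)
    also have "\<dots> = (h ** a) ** b" using a h by (simp add: ctr_def)
    finally show ?thesis by (simp add: matrix_mul_assoc)
  qed
  then show ?thesis using cgrpD(3)[OF S aS bS] by (simp add: ctr_def)
qed

lemma ctr_inv:
  assumes S: "cgrp S" and a: "a \<in> ctr S"
  shows "matrix_inv a \<in> ctr S"
proof -
  have aS: "a \<in> S" using a by (auto simp: ctr_def)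
  have "matrix_inv a ** h = h ** matrix_inv a" if h: "h \<in> S" for h
    using inv_comm[OF cgrpD(4)[OF S aS], of h] a h by (simp add: ctr_def)
  then show ?thesis using cgrpD(5)[OF S aS] by (simp add: ctr_def)
qed

lemma ctr_kap:
  assumes S: "cgrp S" and a: "a \<in> ctr S" and b: "b \<in> S"
  shows "kap a b = 1" "kap b a = 1"
proof -
  have aS: "a \<in> S" using a by (auto simp: ctr_def)
  have c: "a ** b = b ** a" using a b by (auto simp: ctr_def)
  show "kap a b = 1" using kap_1_iff[OF S aS b] c by simp
  show "kap b a = 1" using kap_1_iff[OF S b aS] c by simp
qed

lemma mp_one: "mp A 1 = A" by simp

lemma finite_order:
  assumes S: "cgrp S" and x: "x \<in> S"
  shows "\<exists>e>0. mp x e = cmat 1"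
proof -
  have fin: "finite S" using cgrpD(1)[OF S] .
  have "\<not> inj_on (mp x) {..card S}"
  proof
    assume inj: "inj_on (mp x) {..card S}"
    have "mp x ` {..card S} \<subseteq> S" using mp_in[OF S x] by auto
    then have "card {..card S} \<le> card S" using card_inj_on_le[OF inj _ fin] by blast
    then show False by simp
  qed
  then obtain i j where ij: "i \<noteq> j" "mp x i = mp x j" unfolding inj_on_def by blast
  have gen: "mp x a = mp x b \<Longrightarrow> a < b \<Longrightarrow> \<exists>e>0. mp x e = cmat 1" for a b
  proof -
    assume eq: "mp x a = mp x b" and ab: "a < b"
    have "mp x a ** mp x (b - a) = mp x a ** cmat 1"
      using eq ab mp_add[of x a "b - a"] by simp
    then have "mp x (b - a) = cmat 1" by (rule cancel_left[OF cgrpD(4)[OF S mp_in[OF S x]]])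
    then show ?thesis using ab by (intro exI[of _ "b - a"]) auto
  qed
  show ?thesis
  proof (cases "i < j")
    case True then show ?thesis using gen ij by blast
  next
    case False then have "j < i" using ij by auto
    then show ?thesis using gen ij by metis
  qed
qed

lemma find_x:
  assumes S: "cgrp S" and na: "\<not> abel S"
  shows "\<exists>x p. x \<in> S \<and> x \<notin> ctr S \<and> prime p \<and> mp x p \<in> ctr S"
proof -
  obtain x0 where x0: "x0 \<in> S" "x0 \<notin> ctr S" using na unfolding abel_def ctr_def by blast
  obtain e where e: "e > 0" "mp x0 e = cmat 1" using finite_order[OF S x0(1)] by blast
  define P where "P k \<longleftrightarrow> 0 < k \<and> mp x0 k \<in> ctr S" for k
  have Pe: "P e" using e one_ctr[OF S] by (simp add: P_def)
  define e0 where "e0 = (LEAST k. P k)"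
  have Pe0: "P e0" unfolding e0_def by (rule LeastI[of P, OF Pe])
  have min: "k < e0 \<Longrightarrow> \<not> P k" for k unfolding e0_def by (rule not_less_Least)
  have e01: "e0 \<noteq> 1" using Pe0 x0(2) by (auto simp: P_def)
  obtain p where p: "prime p" "p dvd e0" using prime_factor_nat[OF e01] by blast
  have e0pos: "0 < e0" using Pe0 by (simp add: P_def)
  have p2: "2 \<le> p" using p(1) by (simp add: prime_ge_2_nat)
  have pe: "p \<le> e0" using p(2) e0pos by (simp add: dvd_imp_le)
  define x where "x = mp x0 (e0 div p)"
  have dpos: "0 < e0 div p" using pe p2 by (simp add: div_greater_zero_iff)
  have dlt: "e0 div p < e0" using p2 e0pos by simp
  have "\<not> P (e0 div p)" using min[OF dlt] .
  then have xn: "x \<notin> ctr S" using dpos by (simp add: P_def x_def)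
  have "mp x p = mp x0 (e0 div p * p)" unfolding x_def by (simp add: mp_mult)
  also have "e0 div p * p = e0" using p(2) by simp
  finally have "mp x p \<in> ctr S" using Pe0 by (simp add: P_def)
  moreover have "x \<in> S" unfolding x_def by (rule mp_in[OF S x0(1)])
  ultimately show ?thesis using xn p(1) by blast
qed


lemma reduce:
  fixes S :: "'n::finite cm set"
  assumes S: "cgrp S" and na: "\<not> abel S"
  shows "\<exists>S1 \<subseteq> S. cgrp S1 \<and> card S1 < card S \<and> card S1 * card (ctr S1) = card S * card (ctr S)"
proof -
  obtain x p where x: "x \<in> S" "x \<notin> ctr S" and p: "prime p" and xp: "mp x p \<in> ctr S"
    using find_x[OF S na] by blast
  obtain y where y: "y \<in> S" "x ** y \<noteq> y ** x" using x unfolding ctr_def by blast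
  define w where "w = kap x y"
  have w1: "w \<noteq> 1" using kap_1_iff[OF S x(1) y(1)] y(2) w_def by simp
  have chip: "kap x g ^ p = 1" if "g \<in> S" for g
    using kap_pow1[OF S x(1) that, of p] ctr_kap(1)[OF S xp that] by simp
  have wp: "w ^ p = 1" using chip[OF y(1)] w_def by simp
  have w0: "w \<noteq> 0" using kap_nz[OF S x(1) y(1)] w_def by simp
  note R = roots_as_powers[OF p wp w1]
  note wdvd = root_dvd[OF p wp w1]
  have p2: "2 \<le> p" using p by (simp add: prime_ge_2_nat)
  have fin: "finite S" using cgrpD(1)[OF S] .
  define S1 where "S1 = {g \<in> S. x ** g = g ** x}"
  have S1k: "g \<in> S1 \<longleftrightarrow> g \<in> S \<and> kap x g = 1" for g
    using kap_1_iff[OF S x(1)] unfolding S1_def by auto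
  have S1sub: "S1 \<subseteq> S" unfolding S1_def by auto
  have xS1: "x \<in> S1" unfolding S1_def using x by simp
  have cS1: "cgrp S1"
    unfolding cgrp_def
  proof (intro conjI ballI allI impI)
    show "finite S1" using fin S1sub finite_subset by blast
    show "cmat 1 \<in> S1" using cgrpD(2)[OF S] unfolding S1_def by simp
  next
    fix a b assume a: "a \<in> S1" and b: "b \<in> S1"
    then have aS: "a \<in> S" and bS: "b \<in> S" using S1sub by auto
    have "x ** (a ** b) = (x ** a) ** b" by (simp add: matrix_mul_assoc)
    also have "\<dots> = a ** (x ** b)" using a unfolding S1_def by (simp add: matrix_mul_assoc)
    also have "\<dots> = (a ** b) ** x" using b unfolding S1_def by (simp add: matrix_mul_assoc)
    finally show "a ** b \<in> S1" unfolding S1_def using cgrpD(3)[OF S aS bS] by simp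
    show "\<exists>c. a ** b = cmat c ** (b ** a)" using cgrpD(6)[OF S aS bS] unfolding sc_def .
  next
    fix a assume a: "a \<in> S1"
    then have aS: "a \<in> S" using S1sub by auto
    show "invertible a" using cgrpD(4)[OF S aS] .
    have "x ** matrix_inv a = matrix_inv a ** x"
      using inv_comm[OF cgrpD(4)[OF S aS], of x] a unfolding S1_def by simp
    then show "matrix_inv a \<in> S1" unfolding S1_def using cgrpD(5)[OF S aS] by simp
  next
    fix c :: complex assume "c ^ CARD('n) = 1"
    then show "cmat c \<in> S1" using cgrpD(7)[OF S] unfolding S1_def by (simp add: cmat_comm)
  qed
  define Fb where "Fb j = (\<lambda>g. mp y j ** g) ` S1" for j
  have yjS: "mp y j \<in> S" for j using mp_in[OF S y(1)] .
  have yjinv: "invertible (mp y j)" for j using cgrpD(4)[OF S yjS] .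
  have Fb_eq: "Fb j = {g \<in> S. kap x g = w ^ j}" for j
  proof
    show "Fb j \<subseteq> {g \<in> S. kap x g = w ^ j}"
    proof
      fix g assume "g \<in> Fb j"
      then obtain h where h: "h \<in> S1" "g = mp y j ** h" unfolding Fb_def by blast
      have hS: "h \<in> S" using h S1sub by auto
      have "kap x g = kap x (mp y j) * kap x h" using kap_mult2[OF S x(1) yjS hS] h by simp
      also have "\<dots> = w ^ j" using kap_pow2[OF S x(1) y(1)] h(1) S1k w_def by simp
      finally show "g \<in> {g \<in> S. kap x g = w ^ j}" using cgrpD(3)[OF S yjS hS] h by simp
    qed
  next
    show "{g \<in> S. kap x g = w ^ j} \<subseteq> Fb j"
    proof
      fix g assume g: "g \<in> {g \<in> S. kap x g = w ^ j}"
      then have gS: "g \<in> S" and kg: "kap x g = w ^ j" by auto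
      define h where "h = matrix_inv (mp y j) ** g"
      have iS: "matrix_inv (mp y j) \<in> S" using cgrpD(5)[OF S yjS] .
      have hS: "h \<in> S" unfolding h_def using cgrpD(3)[OF S iS gS] .
      have "kap x h = kap x (matrix_inv (mp y j)) * kap x g" unfolding h_def by (rule kap_mult2[OF S x(1) iS gS])
      also have "\<dots> = inverse (w ^ j) * w ^ j"
        using kap_inv2[OF S x(1) yjS] kap_pow2[OF S x(1) y(1)] kg w_def by simp
      also have "\<dots> = 1" using w0 by simp
      finally have "h \<in> S1" using S1k hS by simp
      moreover have "g = mp y j ** h" unfolding h_def
        using inv_props(1)[OF yjinv] by (simp add: matrix_mul_assoc)
      ultimately show "g \<in> Fb j" unfolding Fb_def by blast
    qed
  qed
  have Sunion: "S = (\<Union>j\<in>{..<p}. Fb j)"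
  proof
    show "S \<subseteq> (\<Union>j\<in>{..<p}. Fb j)"
    proof
      fix g assume g: "g \<in> S"
      have "kap x g \<in> {z. z ^ p = 1}" using chip[OF g] by simp
      then obtain j where j: "j < p" "kap x g = w ^ j" using R(1) by auto
      then show "g \<in> (\<Union>j\<in>{..<p}. Fb j)" using Fb_eq g by auto
    qed
    show "(\<Union>j\<in>{..<p}. Fb j) \<subseteq> S" using Fb_eq by auto
  qed
  have disj: "\<forall>i\<in>{..<p}. \<forall>j\<in>{..<p}. i \<noteq> j \<longrightarrow> Fb i \<inter> Fb j = {}"
  proof (intro ballI impI)
    fix i j assume i: "i \<in> {..<p}" and j: "j \<in> {..<p}" and ij: "i \<noteq> j"
    have "w ^ i \<noteq> w ^ j" using inj_onD[OF R(2) _ i j] ij by auto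
    then show "Fb i \<inter> Fb j = {}" using Fb_eq by auto
  qed
  have cardFb: "card (Fb j) = card S1" for j
  proof -
    have "inj_on (\<lambda>g. mp y j ** g) S1"
      by (rule inj_onI) (rule cancel_left[OF yjinv])
    then show ?thesis unfolding Fb_def by (rule card_image)
  qed
  have finFb: "finite (Fb j)" for j using Fb_eq fin by simp
  have cardS: "card S = p * card S1"
  proof -
    have "card S = (\<Sum>j\<in>{..<p}. card (Fb j))"
      by (subst Sunion) (rule card_UN_disjoint, auto simp: finFb disj)
    then show ?thesis using cardFb by simp
  qed
  have xiS: "mp x i \<in> S" for i using mp_in[OF S x(1)] .
  have xiinv: "invertible (mp x i)" for i using cgrpD(4)[OF S xiS] .
  have kxx: "kap x x = 1" using kap_1_iff[OF S x(1) x(1)] by simp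
  define f where "f = (\<lambda>(z :: 'n cm, i). z ** mp x i)"
  have ctrS1: "ctr S1 = f ` (ctr S \<times> {..<p})"
  proof
    show "ctr S1 \<subseteq> f ` (ctr S \<times> {..<p})"
    proof
      fix g assume g: "g \<in> ctr S1"
      then have gS1: "g \<in> S1" and gc: "\<forall>b\<in>S1. g ** b = b ** g" unfolding ctr_def by auto
      have gS: "g \<in> S" using gS1 S1sub by auto
      define d where "d = kap g y"
      have ypS1: "mp y p \<in> S1"
        using S1k yjS kap_pow2[OF S x(1) y(1), of p] wp w_def by simp
      have "kap g (mp y p) = 1" using kap_1_iff[OF S gS yjS] gc ypS1 by simp
      then have "d ^ p = 1" using kap_pow2[OF S gS y(1)] d_def by simp
      then obtain i where i: "i < p" "d = w ^ i" using R(1) by auto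
      define z where "z = g ** matrix_inv (mp x i)"
      have xiiS: "matrix_inv (mp x i) \<in> S" using cgrpD(5)[OF S xiS] .
      have zS: "z \<in> S" unfolding z_def using cgrpD(3)[OF S gS xiiS] .
      have kzy: "kap z y = 1"
      proof -
        have "kap z y = kap g y * kap (matrix_inv (mp x i)) y"
          unfolding z_def by (rule kap_mult1[OF S gS xiiS y(1)])
        also have "\<dots> = w ^ i * inverse (w ^ i)"
          using kap_inv1[OF S y(1) xiS] kap_pow1[OF S x(1) y(1)] i d_def w_def by simp
        finally show ?thesis using w0 by simp
      qed
      have kzs: "kap z s = 1" if s: "s \<in> S1" for s
      proof -
        have sS: "s \<in> S" using s S1sub by auto
        have "kap z s = kap g s * kap (matrix_inv (mp x i)) s"
          unfolding z_def by (rule kap_mult1[OF S gS xiiS sS])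
        also have "kap g s = 1" using kap_1_iff[OF S gS sS] gc s by simp
        also have "kap (matrix_inv (mp x i)) s = 1"
          using kap_inv1[OF S sS xiS] kap_pow1[OF S x(1) sS] s S1k by simp
        finally show ?thesis by simp
      qed
      have zc: "z \<in> ctr S"
      proof -
        have "z ** h = h ** z" if h: "h \<in> S" for h
        proof -
          obtain j where j: "j < p" "h \<in> Fb j" using Sunion h by auto
          then obtain s where s: "s \<in> S1" "h = mp y j ** s" unfolding Fb_def by blast
          have sS: "s \<in> S" using s S1sub by auto
          have "kap z h = kap z (mp y j) * kap z s" using kap_mult2[OF S zS yjS sS] s by simp
          also have "\<dots> = 1" using kap_pow2[OF S zS y(1)] kzy kzs[OF s(1)] by simp
          finally show ?thesis using kap_1_iff[OF S zS h] by simp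
        qed
        then show ?thesis using zS unfolding ctr_def by simp
      qed
      have "g = z ** mp x i" unfolding z_def
        using inv_props(2)[OF xiinv] by (simp add: matrix_mul_assoc[symmetric])
      then show "g \<in> f ` (ctr S \<times> {..<p})" unfolding f_def using zc i(1) by force
    qed
  next
    show "f ` (ctr S \<times> {..<p}) \<subseteq> ctr S1"
    proof
      fix g assume "g \<in> f ` (ctr S \<times> {..<p})"
      then obtain z i where z: "z \<in> ctr S" and i: "i < p" and g: "g = z ** mp x i"
        unfolding f_def by auto
      have zS: "z \<in> S" using z ctr_sub by auto
      have gS: "g \<in> S" using g cgrpD(3)[OF S zS xiS] by simp
      have "kap x g = kap x z * kap x (mp x i)" using kap_mult2[OF S x(1) zS xiS] g by simp
      also have "\<dots> = 1" using ctr_kap(2)[OF S z x(1)] kap_pow2[OF S x(1) x(1)] kxx by simp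
      finally have gS1: "g \<in> S1" using S1k gS by simp
      have "g ** h = h ** g" if h: "h \<in> S1" for h
      proof -
        have hS: "h \<in> S" using h S1sub by auto
        have "kap g h = kap z h * kap (mp x i) h" using kap_mult1[OF S zS xiS hS] g by simp
        also have "\<dots> = 1" using ctr_kap(1)[OF S z hS] kap_pow1[OF S x(1) hS] h S1k by simp
        finally show ?thesis using kap_1_iff[OF S gS hS] by simp
      qed
      then show "g \<in> ctr S1" using gS1 unfolding ctr_def by simp
    qed
  qed
  have injf: "inj_on f (ctr S \<times> {..<p})"
  proof -
    have key: "i = i' \<and> z = z'" if
      zz: "z \<in> ctr S" "z' \<in> ctr S" and ii: "i < p" "i' < p" "i \<le> i'"
      and eq: "z ** mp x i = z' ** mp x i'" for z z' i i'
    proof -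
      have "z' ** mp x i' = z' ** mp x (i' - i) ** mp x i"
        using mp_add[of x "i' - i" i] ii(3) by (simp add: matrix_mul_assoc)
      then have "z ** mp x i = (z' ** mp x (i' - i)) ** mp x i" using eq by simp
      then have z1: "z = z' ** mp x (i' - i)" by (rule cancel_right[OF xiinv])
      have z'S: "z' \<in> S" using zz ctr_sub by auto
      have "mp x (i' - i) = matrix_inv z' ** z"
        using eq_inv_left[OF cgrpD(4)[OF S z'S] z1[symmetric]] .
      also have "\<dots> \<in> ctr S" using ctr_mult[OF S ctr_inv[OF S zz(2)] zz(1)] .
      finally have "kap (mp x (i' - i)) y = 1" using ctr_kap(1)[OF S _ y(1)] by blast
      then have "w ^ (i' - i) = 1" using kap_pow1[OF S x(1) y(1)] w_def by simp
      then have "p dvd (i' - i)" using wdvd by simp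
      moreover have "i' - i < p" using ii by simp
      ultimately have "i' - i = 0" using dvd_imp_le[of p "i' - i"] by (cases "i' - i = 0") auto
      then have "i = i'" using ii by simp
      then show ?thesis using z1 by simp
    qed
    show ?thesis
    proof (rule inj_onI)
      fix a b assume a: "a \<in> ctr S \<times> {..<p}" and b: "b \<in> ctr S \<times> {..<p}" and fab: "f a = f b"
      obtain z i where zi: "a = (z, i)" by force
      obtain z' i' where zi': "b = (z', i')" by force
      have eq: "z ** mp x i = z' ** mp x i'" using fab zi zi' unfolding f_def by simp
      show "a = b"
      proof (cases "i \<le> i'")
        case True then show ?thesis using key[of z z' i i'] a b zi zi' eq by auto
      next
        case False then show ?thesis using key[of z' z i' i] a b zi zi' eq by auto
      qed
    qed
  qed
  have cardc: "card (ctr S1) = card (ctr S) * p"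
    using ctrS1 card_image[OF injf] by (simp add: card_cartesian_product)
  have S1pos: "0 < card S1" using cS1 cgrpD(1,2)[OF cS1] card_gt_0_iff by blast
  show ?thesis
  proof (intro exI conjI)
    show "S1 \<subseteq> S" by (rule S1sub)
    show "cgrp S1" by (rule cS1)
    show "card S1 < card S" using cardS S1pos p2 by simp
    show "card S1 * card (ctr S1) = card S * card (ctr S)" using cardS cardc by simp
  qed
qed

lemma lagr:
  fixes S :: "'n::finite cm set"
  assumes "cgrp S"
  shows "\<exists>L \<subseteq> S. cgrp L \<and> abel L \<and> card L ^ 2 = card S * card (ctr S)"
  using assms
proof (induction "card S" arbitrary: S rule: less_induct)
  case less
  show ?case
  proof (cases "abel S")
    case True
    then have "ctr S = S" unfolding abel_def ctr_def by auto
    then show ?thesis using True less.prems by (intro exI[of _ S]) (auto simp: power2_eq_square)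
  next
    case False
    obtain S1 where S1: "S1 \<subseteq> S" "cgrp S1" "card S1 < card S"
      "card S1 * card (ctr S1) = card S * card (ctr S)"
      using reduce[OF less.prems False] by blast
    obtain L where "L \<subseteq> S1" "cgrp L" "abel L" "card L ^ 2 = card S1 * card (ctr S1)"
      using less.hyps[OF S1(3) S1(2)] by blast
    then show ?thesis using S1 by auto
  qed
qed


abbreviation rts :: "'n::finite itself \<Rightarrow> complex set" where
  "rts _ \<equiv> {c. c ^ CARD('n) = 1}"

lemma card_pos: "0 < CARD('n::finite)" by simp

lemma root_nz: "(c::complex) ^ CARD('n::finite) = 1 \<Longrightarrow> c \<noteq> 0"
  by (metis card_pos[where 'n='n] zero_neq_one zero_power)

lemma SLn_det: "g \<in> SLn \<longleftrightarrow> Determinants.det (g::'n::finite cm) = 1"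
  by (simp add: SLn_def)

lemma SLn_inv: "g \<in> SLn \<Longrightarrow> invertible (g::'n::finite cm)"
  by (simp add: SLn_det invertible_det_nz)

lemma projn_self: "(g::'n::finite cm) \<in> projn g"
  unfolding projn_def by (rule CollectI, rule exI[of _ 1]) simp

lemma projn_mem: "x \<in> projn g \<longleftrightarrow> (\<exists>c. c ^ CARD('n) = 1 \<and> x = cmat c ** (g::'n::finite cm))"
  unfolding projn_def by blast

lemma projn_scal:
  assumes c: "c ^ CARD('n) = 1"
  shows "projn (cmat c ** g) = projn (g::'n::finite cm)"
proof
  show "projn (cmat c ** g) \<subseteq> projn g"
  proof
    fix x assume "x \<in> projn (cmat c ** g)"
    then obtain d where d: "d ^ CARD('n) = 1" "x = cmat d ** (cmat c ** g)" unfolding projn_mem by blast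
    then have "x = cmat (d * c) ** g" by (simp add: cmat_cmat)
    moreover have "(d * c) ^ CARD('n) = 1" using c d by (simp add: power_mult_distrib)
    ultimately show "x \<in> projn g" unfolding projn_mem by blast
  qed
next
  show "projn g \<subseteq> projn (cmat c ** g)"
  proof
    fix x assume "x \<in> projn g"
    then obtain d where d: "d ^ CARD('n) = 1" "x = cmat d ** g" unfolding projn_mem by blast
    have c0: "c \<noteq> 0" using root_nz[OF c] .
    have "x = cmat (d / c) ** (cmat c ** g)" using d c0 by (simp add: cmat_cmat)
    moreover have "(d / c) ^ CARD('n) = 1" using c d by (simp add: power_divide)
    ultimately show "x \<in> projn (cmat c ** g)" unfolding projn_mem by blast
  qed
qed

lemma projn_eq: "x \<in> projn g \<Longrightarrow> projn x = projn (g::'n::finite cm)"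
  using projn_scal unfolding projn_mem by blast

lemma projn_disj: "x \<in> projn g \<Longrightarrow> x \<in> projn g' \<Longrightarrow> projn g = projn (g'::'n::finite cm)"
  using projn_eq by metis

lemma cosetmul_projn: "cosetmul (projn a) (projn b) = projn (a ** (b::'n::finite cm))"
proof
  show "cosetmul (projn a) (projn b) \<subseteq> projn (a ** b)"
  proof
    fix z assume "z \<in> cosetmul (projn a) (projn b)"
    then obtain x y where xy: "z = x ** y" "x \<in> projn a" "y \<in> projn b" unfolding cosetmul_def by blast
    obtain c where c: "c ^ CARD('n) = 1" "x = cmat c ** a" using xy(2) unfolding projn_mem by blast
    obtain d where d: "d ^ CARD('n) = 1" "y = cmat d ** b" using xy(3) unfolding projn_mem by blast
    have "z = sc c a ** sc d b" using xy c d by (simp add: sc_def)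
    also have "\<dots> = sc (c * d) (a ** b)" by (simp add: mult.commute)
    finally have "z = cmat (c * d) ** (a ** b)" by (simp add: sc_def)
    moreover have "(c * d) ^ CARD('n) = 1" using c d by (simp add: power_mult_distrib)
    ultimately show "z \<in> projn (a ** b)" unfolding projn_mem by blast
  qed
next
  show "projn (a ** b) \<subseteq> cosetmul (projn a) (projn b)"
  proof
    fix z assume "z \<in> projn (a ** b)"
    then obtain c where c: "c ^ CARD('n) = 1" "z = cmat c ** (a ** b)" unfolding projn_mem by blast
    have "z = (cmat c ** a) ** b" using c by (simp add: matrix_mul_assoc)
    moreover have "cmat c ** a \<in> projn a" using c unfolding projn_mem by blast
    ultimately show "z \<in> cosetmul (projn a) (projn b)" unfolding cosetmul_def using projn_self by blast
  qed
qed

lemma card_projn: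
  assumes "invertible (g::'n::finite cm)"
  shows "card (projn g) = CARD('n)" "finite (projn g)"
proof -
  have eq: "projn g = (\<lambda>c. cmat c ** g) ` rts TYPE('n)" unfolding projn_def by blast
  have inj: "inj_on (\<lambda>c. cmat c ** g) (rts TYPE('n))"
    by (rule inj_onI) (rule cancel_scalar[OF assms])
  show "card (projn g) = CARD('n)" unfolding eq card_image[OF inj]
    using card_roots_unity_eq[OF card_pos] by simp
  show "finite (projn g)" unfolding eq
    by (rule finite_imageI) (use finite_roots_unity[of "CARD('n)"] in simp)
qed

definition tc :: "'n::finite cm \<Rightarrow> 'n cm \<Rightarrow> complex \<Rightarrow> bool" where
  "tc u h a \<longleftrightarrow> u ** h = sc a (h ** u)"

lemma tc_mult: "tc u h a \<Longrightarrow> tc v h b \<Longrightarrow> tc (u ** v) h (a * b)"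
  unfolding tc_def
proof -
  assume u: "u ** h = sc a (h ** u)" and v: "v ** h = sc b (h ** v)"
  have "(u ** v) ** h = u ** (v ** h)" by (simp add: matrix_mul_assoc)
  also have "\<dots> = sc b ((u ** h) ** v)" using v by (simp add: matrix_mul_assoc)
  also have "\<dots> = sc (a * b) (h ** (u ** v))" using u by (simp add: matrix_mul_assoc mult.commute)
  finally show "(u ** v) ** h = sc (a * b) (h ** (u ** v))" .
qed

lemma tc_inv:
  assumes inv: "invertible u" and a: "a \<noteq> 0" and t: "tc u h a"
  shows "tc (matrix_inv u) h (inverse a)"
proof -
  note I = inv_props[OF inv]
  have "h ** matrix_inv u = matrix_inv u ** (u ** h) ** matrix_inv u"
    using I by (simp add: matrix_mul_assoc)
  also have "\<dots> = sc a (matrix_inv u ** h ** (u ** matrix_inv u))"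
    using t unfolding tc_def by (simp add: matrix_mul_assoc)
  also have "\<dots> = sc a (matrix_inv u ** h)" using I by simp
  finally have "sc (inverse a) (h ** matrix_inv u) = matrix_inv u ** h" using a by simp
  then show ?thesis unfolding tc_def by simp
qed

lemma tc_1: "tc u h 1 \<longleftrightarrow> u ** h = h ** u" unfolding tc_def by simp



context
  fixes H :: "'n::finite cm set"
  assumes sg: "sl_subgroup H" and irr: "sl_irreducible H"
begin

lemma H_SL: "h \<in> H \<Longrightarrow> h \<in> SLn" using sg unfolding sl_subgroup_def by auto

lemma U_chi:
  assumes a: "a \<in> Un_H H" and h: "h \<in> H"
  shows "\<exists>c. c ^ CARD('n) = 1 \<and> tc a h c"
proof -
  have "projn a \<in> Zn H" using a unfolding Un_H_def by simp
  then have "cosetmul (projn a) (projn h) = cosetmul (projn h) (projn a)" using h unfolding Zn_def by simp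
  then have "projn (a ** h) = projn (h ** a)" by (simp add: cosetmul_projn)
  then have "a ** h \<in> projn (h ** a)" using projn_self[of "a ** h"] by simp
  then show ?thesis unfolding projn_mem tc_def sc_def by blast
qed

lemma U_intro:
  assumes g: "g \<in> SLn" and t: "\<forall>h\<in>H. \<exists>c. c ^ CARD('n) = 1 \<and> tc g h c"
  shows "g \<in> Un_H H"
proof -
  have "projn g \<in> PSLn" using g unfolding PSLn_def by blast
  moreover have "cosetmul (projn g) (projn h) = cosetmul (projn h) (projn g)" if h: "h \<in> H" for h
  proof -
    obtain c where c: "c ^ CARD('n) = 1" "g ** h = cmat c ** (h ** g)"
      using t h unfolding tc_def sc_def by blast
    show ?thesis unfolding cosetmul_projn c(2) projn_scal[OF c(1)] ..
  qed
  ultimately show ?thesis using g unfolding Un_H_def Zn_def by blast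
qed

lemma U_SL: "a \<in> Un_H H \<Longrightarrow> a \<in> SLn" unfolding Un_H_def by simp

lemma U_mult:
  assumes a: "a \<in> Un_H H" and b: "b \<in> Un_H H"
  shows "a ** b \<in> Un_H H"
proof (rule U_intro)
  show "a ** b \<in> SLn" using U_SL[OF a] U_SL[OF b] by (simp add: SLn_det Determinants.det_mul)
  show "\<forall>h\<in>H. \<exists>c. c ^ CARD('n) = 1 \<and> tc (a ** b) h c"
  proof
    fix h assume h: "h \<in> H"
    obtain c where c: "c ^ CARD('n) = 1" "tc a h c" using U_chi[OF a h] by blast
    obtain d where d: "d ^ CARD('n) = 1" "tc b h d" using U_chi[OF b h] by blast
    show "\<exists>c. c ^ CARD('n) = 1 \<and> tc (a ** b) h c"
      using tc_mult[OF c(2) d(2)] c(1) d(1) by (intro exI[of _ "c * d"]) (simp add: power_mult_distrib)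
  qed
qed

lemma U_inv:
  assumes a: "a \<in> Un_H H"
  shows "matrix_inv a \<in> Un_H H"
proof (rule U_intro)
  have inv: "invertible a" using SLn_inv[OF U_SL[OF a]] .
  show "matrix_inv a \<in> SLn" using inv_det[OF inv] U_SL[OF a] by (simp add: SLn_det)
  show "\<forall>h\<in>H. \<exists>c. c ^ CARD('n) = 1 \<and> tc (matrix_inv a) h c"
  proof
    fix h assume h: "h \<in> H"
    obtain c where c: "c ^ CARD('n) = 1" "tc a h c" using U_chi[OF a h] by blast
    show "\<exists>c. c ^ CARD('n) = 1 \<and> tc (matrix_inv a) h c"
      using tc_inv[OF inv root_nz[OF c(1)] c(2)] c(1)
      by (intro exI[of _ "inverse c"]) (simp add: power_inverse)
  qed
qed

lemma U_scal:
  assumes c: "c ^ CARD('n) = 1"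
  shows "cmat c \<in> Un_H H"
proof (rule U_intro)
  show "(cmat c :: 'n cm) \<in> SLn" using c by (simp add: SLn_det det_cmat)
  show "\<forall>h\<in>H. \<exists>c'. c' ^ CARD('n) = 1 \<and> tc (cmat c) h c'"
    by (intro ballI exI[of _ 1]) (simp add: tc_def cmat_comm)
qed

lemma U_sat:
  assumes g: "g \<in> Un_H H" and c: "c ^ CARD('n) = 1"
  shows "cmat c ** g \<in> Un_H H"
  using U_mult[OF U_scal[OF c] g] .

lemma U_comm:
  assumes a: "a \<in> Un_H H" and b: "b \<in> Un_H H"
  shows "\<exists>c. a ** b = cmat c ** (b ** a)"
proof -
  have ia: "invertible a" and ib: "invertible b" using SLn_inv U_SL a b by auto
  define d where "d = a ** b ** matrix_inv a ** matrix_inv b"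
  have "d ** h = h ** d" if h: "h \<in> H" for h
  proof -
    obtain \<alpha> where al: "\<alpha> ^ CARD('n) = 1" "tc a h \<alpha>" using U_chi[OF a h] by blast
    obtain \<beta> where be: "\<beta> ^ CARD('n) = 1" "tc b h \<beta>" using U_chi[OF b h] by blast
    have a0: "\<alpha> \<noteq> 0" and b0: "\<beta> \<noteq> 0" using root_nz al be by auto
    have "tc d h (\<alpha> * \<beta> * inverse \<alpha> * inverse \<beta>)" unfolding d_def
      by (intro tc_mult tc_inv al be ia ib a0 b0)
    then have "tc d h 1" using a0 b0 by (simp add: field_simps)
    then show ?thesis by (simp add: tc_1)
  qed
  then obtain c where c: "d = cmat c" using schur_lemma[OF irr] by blast
  have "d ** (b ** a) = a ** b ** (matrix_inv a ** (matrix_inv b ** b) ** a)"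
    unfolding d_def by (simp add: matrix_mul_assoc)
  also have "\<dots> = a ** b" using inv_props[OF ia] inv_props[OF ib] by simp
  finally show ?thesis using c by metis
qed

lemma U_trace0:
  assumes a: "a \<in> Un_H H" and ns: "\<forall>c. a \<noteq> cmat c"
  shows "trace a = 0"
proof -
  have "\<not> (\<forall>h\<in>H. a ** h = h ** a)" using schur_lemma[OF irr] ns by blast
  then obtain h where h: "h \<in> H" "a ** h \<noteq> h ** a" by blast
  obtain c where c: "c ^ CARD('n) = 1" "tc a h c" using U_chi[OF a h(1)] by blast
  have c1: "c \<noteq> 1" using c h(2) by (auto simp: tc_def)
  have ih: "invertible h" using SLn_inv[OF H_SL[OF h(1)]] .
  have "matrix_inv h ** (a ** h) = sc c (matrix_inv h ** (h ** a))" using c(2) by (simp add: tc_def)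
  also have "\<dots> = sc c a" using inv_props(2)[OF ih] by (simp add: matrix_mul_assoc)
  finally have eq: "matrix_inv h ** (a ** h) = cmat c ** a" by (simp add: sc_def)
  have "trace a = trace ((a ** h) ** matrix_inv h)"
    using inv_props(1)[OF ih] by (simp add: matrix_mul_assoc[symmetric])
  also have "\<dots> = trace (matrix_inv h ** (a ** h))" by (rule trace_mul_sym)
  also have "\<dots> = c * trace a" unfolding eq by (rule trace_cmat_mul)
  finally have "(1 - c) * trace a = 0" by (simp add: algebra_simps)
  then show ?thesis using c1 by simp
qed

end


definition fl :: "'n::finite cm \<Rightarrow> complex^('n \<times> 'n)" where
  "fl a = (\<chi> p. a $ fst p $ snd p)"

lemma fl_inj: "inj (fl :: 'n::finite cm \<Rightarrow> _)"
proof (rule injI)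
  fix a b :: "'n cm" assume "fl a = fl b"
  then have "(fl a) $ (i, j) = (fl b) $ (i, j)" for i j :: 'n by simp
  then have "a $ i $ j = b $ i $ j" for i j :: 'n by (simp add: fl_def)
  then show "a = b" by (simp add: Finite_Cartesian_Product.vec_eq_iff)
qed

definition tau :: "'n::finite cm \<Rightarrow> complex^('n \<times> 'n) \<Rightarrow> complex" where
  "tau b v = (\<Sum>i\<in>UNIV. \<Sum>k\<in>UNIV. b $ i $ k * v $ (k, i))"

lemma tau_fl: "tau b (fl a) = trace (b ** a)"
  by (simp add: tau_def fl_def trace_def matrix_matrix_mult_def)

lemma tau_add: "tau b (x + y) = tau b x + tau b y"
  by (simp add: tau_def distrib_left sum.distrib)

lemma tau_scale: "tau b (c *s x) = c * tau b x"
  by (simp add: tau_def sum_distrib_left mult.left_commute)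

lemma tau_zero: "tau b 0 = 0"
  by (simp add: tau_def)

lemma tau_lin: "finite T \<Longrightarrow> tau b (\<Sum>v\<in>T. u v *s v) = (\<Sum>v\<in>T. u v * tau b v)"
  by (induction T rule: finite_induct) (simp_all add: tau_zero tau_add tau_scale)

lemma indep_fin:
  fixes F :: "'n::finite cm set"
  assumes inv: "\<forall>a\<in>F. invertible a"
    and orth: "\<forall>a\<in>F. \<forall>b\<in>F. a \<noteq> b \<longrightarrow> trace (matrix_inv a ** b) = 0"
  shows "finite F"
proof -
  have "vec.independent (fl ` F)"
    unfolding vec.independent_explicit_finite_subsets
  proof (intro allI impI ballI)
    fix T u v assume T: "T \<subseteq> fl ` F" and finT: "finite T" and sum0: "(\<Sum>v\<in>T. u v *s v) = 0"
      and v: "v \<in> T"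
    obtain a0 where a0: "a0 \<in> F" "v = fl a0" using T v by auto
    have val: "tau (matrix_inv a0) v' = (if v' = v then of_nat CARD('n) else 0)" if v': "v' \<in> T" for v'
    proof -
      obtain a where a: "a \<in> F" "v' = fl a" using T v' by auto
      show ?thesis
      proof (cases "a = a0")
        case True
        then show ?thesis using a a0 tau_fl[of "matrix_inv a0" a0] inv_props(2)[of a0] inv
          by (simp add: trace_I)
      next
        case False
        then have "v' \<noteq> v" using a a0 fl_inj by (auto simp: inj_def)
        then show ?thesis using a a0 tau_fl[of "matrix_inv a0" a] orth False by simp
      qed
    qed
    have "0 = tau (matrix_inv a0) (\<Sum>v\<in>T. u v *s v)" using sum0 by (simp add: tau_zero)
    also have "\<dots> = (\<Sum>v'\<in>T. u v' * tau (matrix_inv a0) v')" by (rule tau_lin[OF finT])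
    also have "\<dots> = (\<Sum>v'\<in>T. if v' = v then u v * of_nat CARD('n) else 0)"
      by (rule sum.cong) (auto simp: val)
    also have "\<dots> = u v * of_nat CARD('n)" using finT v by (simp add: sum.delta)
    finally show "u v = 0" by simp
  qed
  then have "finite (fl ` F)" by (rule vec.finiteI_independent)
  moreover have "inj_on fl F" using inj_on_subset[OF fl_inj subset_UNIV] .
  ultimately show "finite F" by (rule finite_imageD)
qed

context
  fixes H :: "'n::finite cm set"
  assumes sg: "sl_subgroup H" and irr: "sl_irreducible H"
begin

lemmas USL = U_SL[OF sg irr]

lemma Zn_projn: "Zn H = projn ` Un_H H"
proof
  show "Zn H \<subseteq> projn ` Un_H H"
  proof
    fix z assume z: "z \<in> Zn H"
    then have "z \<in> PSLn" unfolding Zn_def by simp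
    then obtain g where g: "g \<in> SLn" "z = projn g" unfolding PSLn_def by blast
    then have "g \<in> Un_H H" using z unfolding Un_H_def by simp
    then show "z \<in> projn ` Un_H H" using g by blast
  qed
  show "projn ` Un_H H \<subseteq> Zn H" unfolding Un_H_def by auto
qed

lemma U_projn_sub: "g \<in> Un_H H \<Longrightarrow> projn g \<subseteq> Un_H H"
proof
  fix x assume g: "g \<in> Un_H H" and "x \<in> projn g"
  then obtain c where c: "c ^ CARD('n) = 1" "x = cmat c ** g" unfolding projn_mem by blast
  then show "x \<in> Un_H H" using U_sat[OF sg irr g c(1)] by simp
qed

lemma U_trace0': "a \<in> Un_H H \<Longrightarrow> \<forall>c. a \<noteq> cmat c \<Longrightarrow> trace a = 0"
  using U_trace0[OF sg irr] by blast

lemma Zn_finite: "finite (Zn H)"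
proof -
  define r where "r z = (SOME g. g \<in> z)" for z :: "'n cm set"
  have r: "r z \<in> Un_H H \<and> projn (r z) = z" if z: "z \<in> Zn H" for z
  proof -
    obtain g where g: "g \<in> Un_H H" "z = projn g" using z Zn_projn by blast
    have "r z \<in> z" unfolding r_def using g projn_self by (metis someI_ex)
    then show ?thesis using g U_projn_sub projn_eq by blast
  qed
  have inj: "inj_on r (Zn H)" by (rule inj_onI) (metis r)
  have "finite (r ` Zn H)"
  proof (rule indep_fin)
    show "\<forall>a\<in>r ` Zn H. invertible a" using r SLn_inv USL by blast
    show "\<forall>a\<in>r ` Zn H. \<forall>b\<in>r ` Zn H. a \<noteq> b \<longrightarrow> trace (matrix_inv a ** b) = 0"
    proof (intro ballI impI)
      fix a b assume a: "a \<in> r ` Zn H" and b: "b \<in> r ` Zn H" and ab: "a \<noteq> b"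
      obtain z where z: "z \<in> Zn H" "a = r z" using a by blast
      obtain z' where z': "z' \<in> Zn H" "b = r z'" using b by blast
      have aU: "a \<in> Un_H H" and bU: "b \<in> Un_H H" using r z z' by auto
      have ia: "invertible a" using SLn_inv[OF USL[OF aU]] .
      have iab: "matrix_inv a ** b \<in> Un_H H" using U_mult[OF sg irr U_inv[OF sg irr aU] bU] .
      show "trace (matrix_inv a ** b) = 0"
      proof (rule U_trace0'[OF iab], rule allI, rule notI)
        fix c assume c: "matrix_inv a ** b = cmat c"
        have "b = a ** cmat c" using c inv_props(1)[OF ia] by (metis matrix_mul_assoc matrix_mul_lid)
        then have bc: "b = cmat c ** a" by (simp add: cmat_comm)
        have "1 = Determinants.det b" using USL[OF bU] by (simp add: SLn_det)
        also have "\<dots> = c ^ CARD('n)" using USL[OF aU] bc by (simp add: SLn_det Determinants.det_mul det_cmat)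
        finally have "c ^ CARD('n) = 1" by simp
        then have "projn b = projn a" using bc projn_scal by simp
        then have "z = z'" using r z z' by metis
        then show False using z z' ab by simp
      qed
    qed
  qed
  then show ?thesis using finite_imageD[OF _ inj] by blast
qed

lemma U_union: "\<Union> (projn ` Un_H H) = Un_H H"
  using U_projn_sub projn_self by blast

lemma U_finite: "finite (Un_H H)"
proof -
  have "finite (\<Union> (projn ` Un_H H))"
  proof (rule finite_Union)
    show "finite (projn ` Un_H H)" using Zn_finite Zn_projn by simp
    show "\<And>M. M \<in> projn ` Un_H H \<Longrightarrow> finite M" using card_projn(2) SLn_inv USL by blast
  qed
  then show ?thesis using U_union by simp
qed

lemma card_sat:
  assumes T: "T \<subseteq> Un_H H" and sat: "\<And>g c. g \<in> T \<Longrightarrow> c ^ CARD('n) = 1 \<Longrightarrow> cmat c ** g \<in> T"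
  shows "card T = CARD('n) * card (projn ` T)"
proof -
  have un: "\<Union> (projn ` T) = T"
  proof
    show "\<Union> (projn ` T) \<subseteq> T"
    proof
      fix x assume "x \<in> \<Union> (projn ` T)"
      then obtain g where g: "g \<in> T" "x \<in> projn g" by blast
      then obtain c where c: "c ^ CARD('n) = 1" "x = cmat c ** g" unfolding projn_mem by blast
      then show "x \<in> T" using sat[OF g(1) c(1)] by simp
    qed
    show "T \<subseteq> \<Union> (projn ` T)" using projn_self by blast
  qed
  have finT: "finite T" using U_finite T finite_subset by blast
  have cardA: "card A = CARD('n)" "finite A" if "A \<in> projn ` T" for A
    using that card_projn SLn_inv USL T by blast+
  have "card T = card (\<Union> (projn ` T))" using un by simp
  also have "\<dots> = sum card (projn ` T)"
  proof (rule card_Union_disjoint)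
    show "pairwise disjnt (projn ` T)"
      unfolding pairwise_def disjnt_def using projn_disj by blast
  qed (use cardA in blast)
  also have "\<dots> = CARD('n) * card (projn ` T)" using cardA by simp
  finally show ?thesis .
qed

lemma cgrp_U: "cgrp (Un_H H)"
  unfolding cgrp_def
proof (intro conjI ballI allI impI)
  show "finite (Un_H H)" by (rule U_finite)
  show "cmat 1 \<in> Un_H H" using U_scal[OF sg irr, of 1] by simp
next
  fix a b assume a: "a \<in> Un_H H" and b: "b \<in> Un_H H"
  show "a ** b \<in> Un_H H" using U_mult[OF sg irr a b] .
  show "\<exists>c. a ** b = cmat c ** (b ** a)" using U_comm[OF sg irr a b] .
next
  fix a assume a: "a \<in> Un_H H"
  show "invertible a" using SLn_inv[OF USL[OF a]] .
  show "matrix_inv a \<in> Un_H H" using U_inv[OF sg irr a] .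
next
  fix c :: complex assume "c ^ CARD('n) = 1"
  then show "cmat c \<in> Un_H H" using U_scal[OF sg irr] by simp
qed

lemma card_U: "card (Un_H H) = CARD('n) * card (Zn H)"
  using card_sat[of "Un_H H"] U_sat[OF sg irr] Zn_projn by simp

lemma sc_cancel: "e \<noteq> 0 \<Longrightarrow> sc e A = sc e B \<Longrightarrow> A = B"
proof -
  assume e: "e \<noteq> 0" and eq: "sc e A = sc e B"
  have "sc (inverse e) (sc e A) = sc (inverse e) (sc e B)" using eq by simp
  then show "A = B" using e by simp
qed

lemma phi_char:
  assumes g: "g \<in> Un_H H" and g': "g' \<in> Un_H H"
  shows "phiH (projn g) (projn g') = 1 \<longleftrightarrow> g ** g' = g' ** g"
proof -
  define x where "x = (SOME x. x \<in> projn g)"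
  define y where "y = (SOME y. y \<in> projn g')"
  have xg: "x \<in> projn g" unfolding x_def using projn_self by (metis someI_ex)
  have yg: "y \<in> projn g'" unfolding y_def using projn_self by (metis someI_ex)
  obtain c where c: "c ^ CARD('n) = 1" "x = cmat c ** g" using xg unfolding projn_mem by blast
  obtain d where d: "d ^ CARD('n) = 1" "y = cmat d ** g'" using yg unfolding projn_mem by blast
  have xU: "x \<in> Un_H H" using U_sat[OF sg irr g c(1)] c(2) by simp
  have yU: "y \<in> Un_H H" using U_sat[OF sg irr g' d(1)] d(2) by simp
  note S = cgrp_U
  have ix: "invertible x" and iy: "invertible y" using cgrpD(4)[OF S] xU yU by auto
  define k where "k = kap x y"
  have xy: "x ** y = sc k (y ** x)" using kap_eq[OF S xU yU] k_def by simp
  have comm_expr: "x ** y ** matrix_inv x ** matrix_inv y = cmat k"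
  proof -
    have "x ** y ** matrix_inv x ** matrix_inv y = sc k (y ** (x ** matrix_inv x) ** matrix_inv y)"
      using xy by (simp add: matrix_mul_assoc)
    also have "\<dots> = sc k (cmat 1)" using inv_props(1)[OF ix] inv_props(1)[OF iy] by simp
    finally show ?thesis by (simp add: sc_def)
  qed
  have phi: "phiH (projn g) (projn g') = k"
    unfolding phiH_def Let_def x_def[symmetric] y_def[symmetric]
    by (rule the_equality) (use comm_expr cmat_inj in auto)
  have "k = 1 \<longleftrightarrow> x ** y = y ** x" using kap_1_iff[OF S xU yU] k_def by simp
  also have "\<dots> \<longleftrightarrow> g ** g' = g' ** g"
  proof -
    have e1: "x ** y = sc (c * d) (g ** g')" using c d by (simp add: sc_def[symmetric] mult.commute)
    have e2: "y ** x = sc (c * d) (g' ** g)" using c d by (simp add: sc_def[symmetric] mult.commute)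
    have cd0: "c * d \<noteq> 0" using root_nz c d by auto
    show ?thesis unfolding e1 e2 using sc_cancel[OF cd0] by auto
  qed
  finally show ?thesis using phi by simp
qed

lemma radK_projn: "radK H = projn ` ctr (Un_H H)"
proof
  show "radK H \<subseteq> projn ` ctr (Un_H H)"
  proof
    fix a assume a: "a \<in> radK H"
    then have aZ: "a \<in> Zn H" and all: "\<forall>b\<in>Zn H. phiH a b = 1" unfolding radK_def by auto
    obtain g where g: "g \<in> Un_H H" "a = projn g" using aZ Zn_projn by blast
    have "g ** g' = g' ** g" if g': "g' \<in> Un_H H" for g'
    proof -
      have "projn g' \<in> Zn H" using g' Zn_projn by blast
      then show ?thesis using all phi_char[OF g(1) g'] g(2) by simp
    qed
    then have "g \<in> ctr (Un_H H)" using g(1) unfolding ctr_def by simp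
    then show "a \<in> projn ` ctr (Un_H H)" using g by blast
  qed
next
  show "projn ` ctr (Un_H H) \<subseteq> radK H"
  proof
    fix a assume "a \<in> projn ` ctr (Un_H H)"
    then obtain g where g: "g \<in> ctr (Un_H H)" "a = projn g" by blast
    have gU: "g \<in> Un_H H" using g ctr_sub by blast
    have aZ: "a \<in> Zn H" using gU g Zn_projn by blast
    have "phiH a b = 1" if b: "b \<in> Zn H" for b
    proof -
      obtain g' where g': "g' \<in> Un_H H" "b = projn g'" using b Zn_projn by blast
      have "g ** g' = g' ** g" using g(1) g'(1) unfolding ctr_def by simp
      then show ?thesis using phi_char[OF gU g'(1)] g g' by simp
    qed
    then show "a \<in> radK H" using aZ unfolding radK_def by simp
  qed
qed

lemma card_radK: "card (ctr (Un_H H)) = CARD('n) * card (radK H)"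
proof -
  have sat: "cmat c ** g \<in> ctr (Un_H H)" if g: "g \<in> ctr (Un_H H)" and c: "c ^ CARD('n) = 1" for g c
  proof -
    have gU: "g \<in> Un_H H" using g ctr_sub by blast
    have "(cmat c ** g) ** b = b ** (cmat c ** g)" if b: "b \<in> Un_H H" for b
    proof -
      have "(cmat c ** g) ** b = sc c (g ** b)" by (simp add: sc_def[symmetric])
      also have "\<dots> = sc c (b ** g)" using g b unfolding ctr_def by simp
      also have "\<dots> = b ** (cmat c ** g)" by (simp add: sc_def[symmetric])
      finally show ?thesis .
    qed
    then show ?thesis using U_sat[OF sg irr gU c] unfolding ctr_def by simp
  qed
  show ?thesis using card_sat[OF ctr_sub sat] radK_projn by simp
qed

end


lemma trace_cmat: "trace (cmat c :: 'a::comm_semiring_1^'n::finite^'n) = c * of_nat CARD('n)"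
  by (simp add: trace_def cmat_entry mult.commute)

theorem mainTheorem10:
  fixes H :: "(complex^'n::finite^'n) set"
  assumes "sl_subgroup H" and "sl_irreducible H"
  shows "\<exists>m::nat. lagr_order H = real m \<and> m dvd CARD('n)"
proof -
  note sg = assms(1) and irr = assms(2)
  define U where "U = Un_H H"
  define n where "n = CARD('n)"
  have n0: "0 < n" unfolding n_def by simp
  have S: "cgrp U" using cgrp_U[OF sg irr] U_def by simp
  obtain L where L: "L \<subseteq> U" "cgrp L" "abel L" "card L ^ 2 = card U * card (ctr U)"
    using lagr[OF S] by blast
  have finL: "finite L" using cgrpD(1)[OF L(2)] .
  have Lcomm: "\<forall>a\<in>L. \<forall>b\<in>L. a ** b = b ** a" using L(3) unfolding abel_def by auto
  have Lord: "\<forall>a\<in>L. \<exists>m>0. mp a m = cmat 1" using finite_order[OF L(2)] by blast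
  obtain w where w: "w \<noteq> 0" "\<forall>a\<in>L. \<exists>c. a *v w = c *s w"
    using common_eigvec[OF finL Lcomm Lord] by blast
  define psi where "psi a = (SOME c. a *v w = c *s w)" for a
  have psi: "a *v w = psi a *s w" if "a \<in> L" for a
    unfolding psi_def using w(2) that by (metis (mono_tags, lifting) someI_ex)
  have psi_uniq: "psi a = c" if "a \<in> L" "a *v w = c *s w" for a c
    using psi[OF that(1)] that(2) w(1) by simp
  have psi_mult: "psi (a ** b) = psi a * psi b" if a: "a \<in> L" and b: "b \<in> L" for a b
  proof (rule psi_uniq)
    show "a ** b \<in> L" using cgrpD(3)[OF L(2) a b] .
    have "(a ** b) *v w = a *v (psi b *s w)" using psi[OF b] by (simp add: matrix_vector_mul_assoc[symmetric])
    also have "\<dots> = psi b *s (psi a *s w)" using psi[OF a] by (simp add: vec.scale)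
    finally show "(a ** b) *v w = (psi a * psi b) *s w" by (simp add: vector_smult_assoc mult.commute)
  qed
  have psi_scal: "psi (cmat c) = c" if c: "c ^ n = 1" for c
    using psi_uniq[OF cgrpD(7)[OF L(2)]] c unfolding n_def by (simp add: cmat_vec)
  have psi_nz: "psi a \<noteq> 0" if a: "a \<in> L" for a
  proof
    assume "psi a = 0"
    then have "a *v w = 0" using psi[OF a] by simp
    then have "(matrix_inv a ** a) *v w = 0" by (simp add: matrix_vector_mul_assoc[symmetric])
    then show False using inv_props(2)[OF cgrpD(4)[OF L(2) a]] w(1) by simp
  qed
  define P where "P = (\<Sum>a\<in>L. cmat (inverse (psi a)) ** a)"
  define N where "N = card L"
  have PP: "P ** P = cmat (of_nat N) ** P"
  proof -
    have "P ** P = (\<Sum>a\<in>L. \<Sum>b\<in>L. sc (inverse (psi a)) a ** sc (inverse (psi b)) b)"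
      unfolding P_def sc_def[symmetric] by (simp only: sum_mat_mul_left[OF finL] sum_mat_mul_right[OF finL]) (rule sum.swap)
    also have "\<dots> = (\<Sum>a\<in>L. \<Sum>b\<in>L. sc (inverse (psi (a ** b))) (a ** b))"
      by (intro sum.cong refl) (simp add: psi_mult mult.commute)
    also have "\<dots> = (\<Sum>a\<in>L. P)"
    proof (rule sum.cong[OF refl])
      fix a assume a: "a \<in> L"
      have ia: "invertible a" using cgrpD(4)[OF L(2) a] .
      have "(\<Sum>b\<in>L. sc (inverse (psi (a ** b))) (a ** b)) = (\<Sum>c\<in>L. sc (inverse (psi c)) c)"
      proof (rule sum.reindex_bij_witness[where j="\<lambda>b. a ** b" and i="\<lambda>c. matrix_inv a ** c"])
        fix b assume "b \<in> L" then show "matrix_inv a ** (a ** b) = b"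
          using inv_props(2)[OF ia] by (simp add: matrix_mul_assoc)
      next
        fix b assume "b \<in> L" then show "a ** b \<in> L" using cgrpD(3)[OF L(2) a] by simp
      next
        fix c assume "c \<in> L" then show "a ** (matrix_inv a ** c) = c"
          using inv_props(1)[OF ia] by (simp add: matrix_mul_assoc)
      next
        fix c assume "c \<in> L" then show "matrix_inv a ** c \<in> L"
          using cgrpD(3)[OF L(2) cgrpD(5)[OF L(2) a]] by simp
      qed simp
      then show "(\<Sum>b\<in>L. sc (inverse (psi (a ** b))) (a ** b)) = P"
        unfolding P_def sc_def by simp
    qed
    also have "\<dots> = (\<Sum>a\<in>L. cmat 1 ** P)" by simp
    also have "\<dots> = cmat (\<Sum>a\<in>L. 1) ** P" by (rule cmat_sum[OF finL])
    finally show ?thesis unfolding N_def by simp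
  qed
  have N0: "0 < N" unfolding N_def using finL cgrpD(2)[OF L(2)] card_gt_0_iff by blast
  define Q where "Q = sc (inverse (of_nat N)) P"
  have QQ: "Q ** Q = Q"
  proof -
    have "Q ** Q = sc (inverse (of_nat N) * inverse (of_nat N)) (P ** P)" unfolding Q_def by simp
    also have "\<dots> = sc (inverse (of_nat N) * inverse (of_nat N) * of_nat N) P"
      unfolding PP sc_def[symmetric] by simp
    also have "inverse (of_nat N) * inverse (of_nat N) * of_nat N = (inverse (of_nat N) :: complex)"
      using N0 by (simp add: field_simps)
    finally show ?thesis unfolding Q_def .
  qed
  obtain k where k: "trace Q = of_nat k" using idem_trace[OF QQ] by blast
  have trP: "trace P = of_nat (n * n)"
  proof -
    have "trace P = (\<Sum>a\<in>L. inverse (psi a) * trace a)"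
      unfolding P_def by (simp add: trace_sum[OF finL] trace_cmat_mul)
    define Sc where "Sc = (\<lambda>c. cmat c :: 'n cm) ` {c. c ^ n = 1}"
    have ScL: "Sc \<subseteq> L" unfolding Sc_def n_def using cgrpD(7)[OF L(2)] by blast
    have zero: "inverse (psi a) * trace a = 0" if a: "a \<in> L - Sc" for a
    proof -
      have aU: "a \<in> Un_H H" using a L(1) U_def by auto
      have "\<forall>c. a \<noteq> cmat c"
      proof (intro allI notI)
        fix c assume ac: "a = cmat c"
        have "c ^ n = 1" using U_SL[OF sg irr aU] ac unfolding n_def by (simp add: SLn_det det_cmat)
        then show False using a ac unfolding Sc_def by auto
      qed
      then show ?thesis using U_trace0[OF sg irr aU] by simp
    qed
    have "(\<Sum>a\<in>L. inverse (psi a) * trace a) = (\<Sum>a\<in>Sc. inverse (psi a) * trace a)"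
      by (rule sum.mono_neutral_right[OF finL ScL]) (use zero in blast)
    also have "\<dots> = (\<Sum>c\<in>{c. c ^ n = 1}. inverse (psi (cmat c :: 'n cm)) * trace (cmat c :: 'n cm))"
    proof -
      have injc: "inj_on (\<lambda>c. cmat c :: 'n cm) {c. c ^ n = 1}" by (rule inj_onI) (rule cmat_inj)
      show ?thesis unfolding Sc_def using sum.reindex[OF injc] by (simp add: comp_def)
    qed
    also have "\<dots> = (\<Sum>c\<in>{c::complex. c ^ n = 1}. of_nat n)"
    proof (rule sum.cong[OF refl])
      fix c :: complex assume "c \<in> {c. c ^ n = 1}"
      then have c: "c ^ n = 1" by simp
      have "c \<noteq> 0" using c n0 by (auto simp: zero_power)
      then show "inverse (psi (cmat c :: 'n cm)) * trace (cmat c :: 'n cm) = of_nat n"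
        using psi_scal[OF c] unfolding trace_cmat n_def by simp
    qed
    also have "\<dots> = of_nat (n * n)" using card_roots_unity_eq[OF n0] by simp
    finally show ?thesis using \<open>trace P = _\<close> by simp
  qed
  have "(of_nat k :: complex) = inverse (of_nat N) * of_nat (n * n)"
    using k trP unfolding Q_def sc_def trace_cmat_mul by simp
  then have "(of_nat (N * k) :: complex) = of_nat (n * n)" using N0 by (simp add: field_simps)
  then have kN: "N * k = n * n" by (simp only: of_nat_eq_iff)
  have cU: "card U = n * card (Zn H)" using card_U[OF sg irr] U_def n_def by simp
  have cK: "card (ctr U) = n * card (radK H)" using card_radK[OF sg irr] U_def n_def by simp
  define Z where "Z = card (Zn H) * card (radK H)"
  have N2: "N ^ 2 = n ^ 2 * Z" using L(4) cU cK unfolding N_def Z_def by (simp add: power2_eq_square ac_simps)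
  have "n ^ 2 dvd N ^ 2" using N2 by simp
  then have "n dvd N" by simp
  then obtain m where m: "N = n * m" by (auto elim: dvdE)
  have "n ^ 2 * m ^ 2 = n ^ 2 * Z" using N2 m by (simp add: power_mult_distrib)
  then have mZ: "m ^ 2 = Z" using n0 by simp
  have "n * (m * k) = n * n" using kN m by (simp add: ac_simps)
  then have "m * k = n" using n0 by simp
  then have mdvd: "m dvd CARD('n)" unfolding n_def by (metis dvd_triv_left)
  have "lagr_order H = sqrt (real Z)" unfolding lagr_order_def Z_def by simp
  also have "\<dots> = sqrt (real m ^ 2)" using mZ by (metis of_nat_power)
  also have "\<dots> = real m" by simp
  finally show ?thesis using mdvd by blast
qed


end
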